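(* Let $e\ge2$ and let $\lambda$ be a nonempty $e$-regular partition with inner corners $i_1<\dots<i_{r+1}$, and let $\omega^+_\lambda$ be its outer flattening. Then: (1) $0\le\omega^+_\lambda(s)-\omega_\lambda(s)\le e$ for all $s\in\mathbb R$; (2) $\omega^+_\lambda(s)=|s|$ for all $s\notin(i_1-1,i_{r+1})$; (3) the set $G^+_\lambda=\mathrm{gr}(\omega^+_\lambda)$ satisfies $\mathrm{sh}_e(G^+_\lambda)=G^+_\lambda$.
   Context: A partition $\lambda=(\lambda_1\ge\dots\ge\lambda_h>0)$ is $e$-regular if $\lambda_i>\lambda_{i+e-1}$ for all $i\le h-e+1$. $Y(\lambda)=\{(a,b):1\le a\le h,1\le b\le\lambda_a\}$; node $(a,b)$ corresponds to the closed square with vertices $(a-b,a+b),(a-b\pm1,a+b-1),(a-b,a+b-2)$, and $\omega_\lambda(x)=\max(|x|,\sup\{y:(x,y)\text{ lies in one of these squares}\})$. An integer $c$ is an outer (resp. inner) corner if $\omega_\lambda'=1$ on $(c-1,c)$ and $-1$ on $(c,c+1)$ (resp. $-1$ then $1$); the outer corners are $c_1<\dots<c_r$ and inner corners $i_1<\dots<i_{r+1}$. Let $\alpha_e=1-2e^{-1}$. Outer flattening: $\omega^{(0)}=\omega_\lambda$; for $k=1,\dots,r$, let $h_k<c_k$ be the abscissa of the first point where the line of slope $\alpha_e$ through $(c_k,\omega_\lambda(c_k))$, followed from $c_k$ in the negative direction, meets the graph of $\omega^{(k-1)}$; $\omega^{(k)}=\omega^{(k-1)}$ on $(-\infty,h_k]\cup[c_k,\infty)$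 and $\omega^{(k)}(s)=\omega_\lambda(c_k)+\alpha_e(s-c_k)$ on $[h_k,c_k]$. Set $\omega^+_\lambda=\omega^{(r)}$. For continuous $g\ge|\cdot|$ with $g(x)=|x|$ for $|x|$ large and $g\ne|\cdot|$: $a_g=\inf\{x:g(x)\ne|x|\}$, $b_g=\sup\{x:g(x)\ne|x|\}$, $\mathrm{gr}(g)=\{(x,y)\in[a_g,b_g]\times\mathbb R_{\ge0}:|x|\le y\le g(x)\}$. Shaking: $D$ the line $y=-x$, $v$ the unit vector positively collinear to $(1,\alpha_e)$; for compact $K$, $\mathrm{sh}_e(K)=\bigcup_{p\in D}K^p$ with $K^p=\emptyset$ if $K\cap(p+\mathbb Rv)=\emptyset$ and otherwise the segment from $p$ to $p+|K\cap(p+\mathbb Rv)|\,v$ ($|\cdot|$ one-dimensional Lebesgue measure). *)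

theory Defs
  imports "HOL-Analysis.Analysis"
begin

text \<open>A partition is a list of positive naturals, weakly decreasing;
  lam ! (i-1) is the part lambda_i (0-based indexing in the list).\<close>
definition is_partition :: "nat list \<Rightarrow> bool" where
  "is_partition lam \<longleftrightarrow> sorted_wrt (\<ge>) lam \<and> (\<forall>x\<in>set lam. 0 < x)"

definition e_regular :: "nat \<Rightarrow> nat list \<Rightarrow> bool" where
  "e_regular e lam \<longleftrightarrow> (\<forall>i. i + e - 1 < length lam \<longrightarrow> lam ! i > lam ! (i + e - 1))"

definition young :: "nat list \<Rightarrow> (nat \<times> nat) set" where
  "young lam = {(a, b). 1 \<le> a \<and> a \<le> length lam \<and> 1 \<le> b \<and> b \<le> lam ! (a - 1)}"

definition node_square :: "nat \<Rightarrow> nat \<Rightarrow> (real \<times> real) set" where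
  "node_square a b = convex hull
     {(real a - real b, real a + real b),
      (real a - real b + 1, real a + real b - 1),
      (real a - real b - 1, real a + real b - 1),
      (real a - real b, real a + real b - 2)}"

definition omega :: "nat list \<Rightarrow> real \<Rightarrow> real" where
  "omega lam x = (let S = {y. \<exists>(a, b)\<in>young lam. (x, y) \<in> node_square a b}
                  in if S = {} then \<bar>x\<bar> else max \<bar>x\<bar> (Sup S))"

definition outer_corners :: "nat list \<Rightarrow> int set" where
  "outer_corners lam = {c. (\<forall>s\<in>{real_of_int c - 1<..<real_of_int c}. (omega lam has_real_derivative 1) (at s))
                         \<and> (\<forall>s\<in>{real_of_int c<..<real_of_int c + 1}. (omega lam has_real_derivative -1) (at s))}"

definition inner_corners :: "nat list \<Rightarrow> int set" where
  "inner_corners lam = {c. (\<forall>s\<in>{real_of_int c - 1<..<real_of_int c}. (omega lam has_real_derivative -1) (at s))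
                         \<and> (\<forall>s\<in>{real_of_int c<..<real_of_int c + 1}. (omega lam has_real_derivative 1) (at s))}"

definition alpha :: "nat \<Rightarrow> real" where
  "alpha e = 1 - 2 / real e"

text \<open>h_k: abscissa of the first point (going left from c_k) where the line of slope alpha_e
  through (c_k, omega_lambda(c_k)) meets the graph of the current function w.\<close>
definition flat_point :: "nat \<Rightarrow> nat list \<Rightarrow> int \<Rightarrow> (real \<Rightarrow> real) \<Rightarrow> real" where
  "flat_point e lam c w = Sup {s. s < real_of_int c \<and>
       w s = omega lam (real_of_int c) + alpha e * (s - real_of_int c)}"

definition flat_step :: "nat \<Rightarrow> nat list \<Rightarrow> int \<Rightarrow> (real \<Rightarrow> real) \<Rightarrow> (real \<Rightarrow> real)" where
  "flat_step e lam c w = (\<lambda>s. if flat_point e lam c w \<le> s \<and> s \<le> real_of_int c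
        then omega lam (real_of_int c) + alpha e * (s - real_of_int c) else w s)"

definition omega_plus :: "nat \<Rightarrow> nat list \<Rightarrow> real \<Rightarrow> real" where
  "omega_plus e lam = fold (flat_step e lam) (sorted_list_of_set (outer_corners lam)) (omega lam)"

definition gr :: "(real \<Rightarrow> real) \<Rightarrow> (real \<times> real) set" where
  "gr g = (let a = Inf {x. g x \<noteq> \<bar>x\<bar>}; b = Sup {x. g x \<noteq> \<bar>x\<bar>}
           in {(x, y). a \<le> x \<and> x \<le> b \<and> 0 \<le> y \<and> \<bar>x\<bar> \<le> y \<and> y \<le> g x})"

text \<open>The one-dimensional Lebesgue measure of K \<inter> (p + R v) is the Lebesgue measure of the
  parameter set, v being a unit vector.\<close>
definition shake_dir :: "nat \<Rightarrow> real \<times> real" where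
  "shake_dir e = (1 / norm (1::real, alpha e)) *\<^sub>R (1, alpha e)"

definition shake :: "nat \<Rightarrow> (real \<times> real) set \<Rightarrow> (real \<times> real) set" where
  "shake e K = (\<Union>p\<in>{q. snd q = - fst q}.
     if K \<inter> {p + t *\<^sub>R shake_dir e | t. True} = {} then {}
     else closed_segment p (p + measure lborel {t. p + t *\<^sub>R shake_dir e \<in> K} *\<^sub>R shake_dir e))"

end

theory Submission
  imports Defs
begin


definition yl :: "nat list \<Rightarrow> nat \<Rightarrow> nat" where
  "yl lam a = (if 1 \<le> a \<and> a \<le> length lam then lam ! (a - 1) else 0)"

lemma young_yl: "(a, b) \<in> young lam \<longleftrightarrow> 1 \<le> a \<and> 1 \<le> b \<and> b \<le> yl lam a"
  by (auto simp: young_def yl_def)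

lemma finite_young: "finite (young lam)"
proof -
  have "young lam \<subseteq> {..length lam} \<times> {..sum_list lam}"
  proof
    fix z assume "z \<in> young lam"
    then obtain a b where z: "z = (a,b)" "1 \<le> a" "a \<le> length lam" "1 \<le> b" "b \<le> lam ! (a - 1)"
      by (auto simp: young_def)
    have "lam ! (a - 1) \<in> set lam" using z by (intro nth_mem) auto
    then have "lam ! (a - 1) \<le> sum_list lam" by (rule member_le_sum_list) simp
    then show "z \<in> {..length lam} \<times> {..sum_list lam}" using z by auto
  qed
  then show ?thesis by (rule finite_subset) auto
qed

lemma yl_mono: assumes "is_partition lam" "1 \<le> a" "a \<le> a'" shows "yl lam a' \<le> yl lam a"
proof -
  have s: "sorted_wrt (\<ge>) lam" using assms(1) by (simp add: is_partition_def)
  show ?thesis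
  proof (cases "a' \<le> length lam")
    case True
    show ?thesis
    proof (cases "a = a'")
      case False
      then have "a - 1 < a' - 1" using assms by auto
      then have "lam ! (a - 1) \<ge> lam ! (a' - 1)" using sorted_wrt_nth_less[OF s, of "a-1" "a'-1"] True assms by auto
      then show ?thesis using True assms by (simp add: yl_def)
    qed simp
  next
    case False
    then show ?thesis by (simp add: yl_def)
  qed
qed

lemma yl_pos: assumes "is_partition lam" "1 \<le> a" "a \<le> length lam" shows "1 \<le> yl lam a"
proof -
  have "lam ! (a - 1) \<in> set lam" using assms by (intro nth_mem) auto
  then have "0 < lam ! (a - 1)" using assms(1) by (auto simp: is_partition_def)
  then show ?thesis using assms by (simp add: yl_def)
qed

lemma yl_zero: "length lam < a \<Longrightarrow> yl lam a = 0"
  by (simp add: yl_def)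

lemma young_down:
  assumes "is_partition lam" "(a,b) \<in> young lam" "1 \<le> a'" "a' \<le> a" "1 \<le> b'" "b' \<le> b"
  shows "(a',b') \<in> young lam"
  using assms yl_mono[OF assms(1), of a' a] by (auto simp: young_yl)

definition al :: "nat list \<Rightarrow> int \<Rightarrow> nat" where
  "al lam n = Max ({0} \<union> {a. \<exists>b. (a,b) \<in> young lam \<and> int a - int b = n})"

definition be :: "nat list \<Rightarrow> int \<Rightarrow> nat" where
  "be lam n = Max ({0} \<union> {b. \<exists>a. (a,b) \<in> young lam \<and> int a - int b = n + 1})"

lemma fin_al: "finite {a. \<exists>b. (a,b) \<in> young lam \<and> int a - int b = n}"
proof -
  have "{a. \<exists>b. (a,b) \<in> young lam \<and> int a - int b = n} \<subseteq> fst ` young lam" by force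
  then show ?thesis using finite_young by (rule finite_subset[OF _ finite_imageI])
qed

lemma fin_be: "finite {b. \<exists>a. (a,b) \<in> young lam \<and> int a - int b = n + 1}"
proof -
  have "{b. \<exists>a. (a,b) \<in> young lam \<and> int a - int b = n + 1} \<subseteq> snd ` young lam" by force
  then show ?thesis using finite_young by (rule finite_subset[OF _ finite_imageI])
qed

lemma al_ge: "(a,b) \<in> young lam \<Longrightarrow> int a - int b = n \<Longrightarrow> a \<le> al lam n"
  unfolding al_def by (rule Max_ge) (use fin_al in auto)

lemma be_ge: "(a,b) \<in> young lam \<Longrightarrow> int a - int b = n + 1 \<Longrightarrow> b \<le> be lam n"
  unfolding be_def by (rule Max_ge) (use fin_be in auto)

lemma al_in: "al lam n = 0 \<or> (\<exists>b. (al lam n, b) \<in> young lam \<and> int (al lam n) - int b = n)"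
proof -
  have "al lam n \<in> {0} \<union> {a. \<exists>b. (a,b) \<in> young lam \<and> int a - int b = n}"
    unfolding al_def by (rule Max_in) (use fin_al in auto)
  then show ?thesis by auto
qed

lemma be_in: "be lam n = 0 \<or> (\<exists>a. (a, be lam n) \<in> young lam \<and> int a - int (be lam n) = n + 1)"
proof -
  have "be lam n \<in> {0} \<union> {b. \<exists>a. (a,b) \<in> young lam \<and> int a - int b = n + 1}"
    unfolding be_def by (rule Max_in) (use fin_be in auto)
  then show ?thesis by auto
qed

lemma sq_bound:
  assumes "(x,y) \<in> node_square a b" shows "y + x \<le> 2 * real a \<and> y - x \<le> 2 * real b"
proof -
  let ?C = "{z :: real \<times> real. snd z + fst z \<le> 2 * real a \<and> snd z - fst z \<le> 2 * real b}"
  have cv: "convex ?C"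
    unfolding convex_def
  proof (intro ballI allI impI)
    fix z w :: "real \<times> real" and u v :: real
    assume z: "z \<in> ?C" and w: "w \<in> ?C" and uv: "0 \<le> u" "0 \<le> v" "u + v = 1"
    have "u * (snd z + fst z) \<le> u * (2 * real a)" using z uv by (intro mult_left_mono) auto
    moreover have "v * (snd w + fst w) \<le> v * (2 * real a)" using w uv by (intro mult_left_mono) auto
    moreover have "u * (snd z - fst z) \<le> u * (2 * real b)" using z uv by (intro mult_left_mono) auto
    moreover have "v * (snd w - fst w) \<le> v * (2 * real b)" using w uv by (intro mult_left_mono) auto
    ultimately have "(u * snd z + v * snd w) + (u * fst z + v * fst w) \<le> (u + v) * (2 * real a)"
      and "(u * snd z + v * snd w) - (u * fst z + v * fst w) \<le> (u + v) * (2 * real b)"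
      by (simp_all add: algebra_simps)
    then show "u *\<^sub>R z + v *\<^sub>R w \<in> ?C" using uv by simp
  qed
  have "node_square a b \<subseteq> ?C"
    unfolding node_square_def by (rule hull_minimal) (use cv in auto)
  then show ?thesis using assms by auto
qed

lemma sq_top1:
  assumes "real a - real b \<le> x" "x \<le> real a - real b + 1"
  shows "(x, 2 * real a - x) \<in> node_square a b"
proof -
  let ?P = "(real a - real b, real a + real b)" and ?Q = "(real a - real b + 1, real a + real b - 1)"
  define u where "u = x - (real a - real b)"
  have P: "?P \<in> node_square a b" unfolding node_square_def by (rule hull_inc) auto
  have Q: "?Q \<in> node_square a b" unfolding node_square_def by (rule hull_inc) auto
  have "(1 - u) *\<^sub>R ?P + u *\<^sub>R ?Q \<in> node_square a b"
    unfolding node_square_def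
    by (rule convexD[OF convex_convex_hull]) (use P Q assms in \<open>auto simp: u_def node_square_def\<close>)
  moreover have "(1 - u) *\<^sub>R ?P + u *\<^sub>R ?Q = (x, 2 * real a - x)"
    by (auto simp: u_def algebra_simps)
  ultimately show ?thesis by simp
qed

lemma sq_top2:
  assumes "real a - real b - 1 \<le> x" "x \<le> real a - real b"
  shows "(x, 2 * real b + x) \<in> node_square a b"
proof -
  let ?P = "(real a - real b - 1, real a + real b - 1)" and ?Q = "(real a - real b, real a + real b)"
  define u where "u = x - (real a - real b - 1)"
  have P: "?P \<in> node_square a b" unfolding node_square_def by (rule hull_inc) auto
  have Q: "?Q \<in> node_square a b" unfolding node_square_def by (rule hull_inc) auto
  have "(1 - u) *\<^sub>R ?P + u *\<^sub>R ?Q \<in> node_square a b"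
    unfolding node_square_def
    by (rule convexD[OF convex_convex_hull]) (use P Q assms in \<open>auto simp: u_def node_square_def\<close>)
  moreover have "(1 - u) *\<^sub>R ?P + u *\<^sub>R ?Q = (x, 2 * real b + x)"
    by (auto simp: u_def algebra_simps)
  ultimately show ?thesis by simp
qed


lemma omega_piece:
  assumes part: "is_partition lam" and x: "real_of_int n \<le> x" "x \<le> real_of_int n + 1"
  shows "omega lam x = max (2 * real (al lam n) - x) (2 * real (be lam n) + x)"
proof -
  define S where "S = {y. \<exists>(a, b)\<in>young lam. (x, y) \<in> node_square a b}"
  define M where "M = max (2 * real (al lam n) - x) (2 * real (be lam n) + x)"
  have absM: "\<bar>x\<bar> \<le> M" unfolding M_def by auto
  have ub: "y \<le> M" if "y \<in> S" for y
  proof -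
    from that obtain a b where ab: "(a,b) \<in> young lam" "(x,y) \<in> node_square a b" by (auto simp: S_def)
    from sq_bound[OF ab(2)] have h1: "y + x \<le> 2 * real a" and h2: "y - x \<le> 2 * real b" by auto
    have a1: "1 \<le> a" and b1: "1 \<le> b" using ab(1) by (auto simp: young_def)
    show ?thesis
    proof (cases "a \<le> al lam n")
      case True
      then have "real a \<le> real (al lam n)" by simp
      then have "y \<le> 2 * real (al lam n) - x" using h1 by linarith
      then show ?thesis unfolding M_def by (simp add: le_max_iff_disj)
    next
      case na: False
      show ?thesis
      proof (cases "b \<le> be lam n")
        case True
        then have "real b \<le> real (be lam n)" by simp
        then have "y \<le> 2 * real (be lam n) + x" using h2 by linarith
        then show ?thesis unfolding M_def by (simp add: le_max_iff_disj)
      next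
        case nb: False
        show ?thesis
        proof (cases "n + 1 \<le> int a - int b")
          case d: True
          show ?thesis
          proof (cases "1 \<le> int b + n + 1")
            case True
            define r where "r = nat (int b + n + 1)"
            have r1: "1 \<le> r" "r \<le> a" using True d by (auto simp: r_def)
            have "(r, b) \<in> young lam" by (rule young_down[OF part ab(1) r1(1) r1(2) b1]) simp
            moreover have "int r - int b = n + 1" using True by (simp add: r_def)
            ultimately have "b \<le> be lam n" by (rule be_ge)
            then show ?thesis using nb by simp
          next
            case False
            then have "real_of_int (int b + n + 1) \<le> 0" by linarith
            then have "real b + real_of_int n + 1 \<le> 0" by simp
            then have "y \<le> \<bar>x\<bar>" using h2 x by linarith
            then show ?thesis using absM by linarith
          qed
        next
          case d: False
          show ?thesis
          proof (cases "1 \<le> int a - n")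
            case True
            define c where "c = nat (int a - n)"
            have c1: "1 \<le> c" "c \<le> b" using True d by (auto simp: c_def)
            have "(a, c) \<in> young lam" by (rule young_down[OF part ab(1) a1 _ c1(1) c1(2)]) simp
            moreover have "int a - int c = n" using True by (simp add: c_def)
            ultimately have "a \<le> al lam n" by (rule al_ge)
            then show ?thesis using na by simp
          next
            case False
            then have "real_of_int (int a) \<le> real_of_int n" by linarith
            then have "real a \<le> real_of_int n" by simp
            then have "y \<le> \<bar>x\<bar>" using h1 x by linarith
            then show ?thesis using absM by linarith
          qed
        qed
      qed
    qed
  qed
  have inS1: "2 * real (al lam n) - x \<in> S" if "al lam n \<noteq> 0"
  proof -
    from al_in[of lam n] that obtain b where b: "(al lam n, b) \<in> young lam" "int (al lam n) - int b = n" by auto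
    then have "real_of_int (int (al lam n) - int b) = real_of_int n" by simp
    then have "real (al lam n) - real b = real_of_int n" by simp
    then have "(x, 2 * real (al lam n) - x) \<in> node_square (al lam n) b" using x by (intro sq_top1) auto
    then show ?thesis using b unfolding S_def by auto
  qed
  have inS2: "2 * real (be lam n) + x \<in> S" if "be lam n \<noteq> 0"
  proof -
    from be_in[of lam n] that obtain a where a: "(a, be lam n) \<in> young lam" "int a - int (be lam n) = n + 1" by auto
    then have "real_of_int (int a - int (be lam n)) = real_of_int (n + 1)" by simp
    then have "real a - real (be lam n) = real_of_int n + 1" by simp
    then have "(x, 2 * real (be lam n) + x) \<in> node_square a (be lam n)" using x by (intro sq_top2) auto
    then show ?thesis using a unfolding S_def by auto
  qed
  have om: "omega lam x = (if S = {} then \<bar>x\<bar> else max \<bar>x\<bar> (Sup S))"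
    unfolding omega_def S_def Let_def by simp
  show ?thesis
  proof (cases "S = {}")
    case True
    then have "al lam n = 0" "be lam n = 0" using inS1 inS2 by auto
    then show ?thesis using om True by (simp add: max_def)
  next
    case False
    have bdd: "bdd_above S" using ub by (auto simp: bdd_above_def)
    have "Sup S \<le> M" using False ub by (intro cSup_least) auto
    moreover have "M \<le> max \<bar>x\<bar> (Sup S)"
    proof -
      have "2 * real (al lam n) - x \<le> max \<bar>x\<bar> (Sup S)"
      proof (cases "al lam n = 0")
        case True then show ?thesis by simp
      next
        case False then have "2 * real (al lam n) - x \<le> Sup S" using inS1 bdd by (intro cSup_upper) auto
        then show ?thesis by simp
      qed
      moreover have "2 * real (be lam n) + x \<le> max \<bar>x\<bar> (Sup S)"
      proof (cases "be lam n = 0")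
        case True then show ?thesis by simp
      next
        case False then have "2 * real (be lam n) + x \<le> Sup S" using inS2 bdd by (intro cSup_upper) auto
        then show ?thesis by simp
      qed
      ultimately show ?thesis unfolding M_def by simp
    qed
    ultimately have "omega lam x = M" using om False absM by simp
    then show ?thesis unfolding M_def .
  qed
qed


definition sg :: "nat list \<Rightarrow> int \<Rightarrow> real" where
  "sg lam n = (if int (al lam n) \<le> int (be lam n) + n then 1 else -1)"

lemma sg_pm: "sg lam n = 1 \<or> sg lam n = -1"
  by (simp add: sg_def)

lemma omega_aff:
  assumes part: "is_partition lam" and x: "real_of_int n \<le> x" "x \<le> real_of_int n + 1"
  shows "omega lam x = omega lam (real_of_int n) + sg lam n * (x - real_of_int n)"
proof -
  have ox: "omega lam x = max (2 * real (al lam n) - x) (2 * real (be lam n) + x)"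
    by (rule omega_piece[OF part x])
  have on: "omega lam (real_of_int n) = max (2 * real (al lam n) - real_of_int n) (2 * real (be lam n) + real_of_int n)"
    by (rule omega_piece[OF part]) auto
  show ?thesis
  proof (cases "int (al lam n) \<le> int (be lam n) + n")
    case True
    then have "real_of_int (int (al lam n)) \<le> real_of_int (int (be lam n) + n)" by linarith
    then have r: "real (al lam n) \<le> real (be lam n) + real_of_int n" by simp
    have "omega lam x = 2 * real (be lam n) + x" using ox r x by simp
    moreover have "omega lam (real_of_int n) = 2 * real (be lam n) + real_of_int n" using on r by simp
    ultimately show ?thesis using True by (simp add: sg_def)
  next
    case False
    then have "real_of_int (int (al lam n)) \<ge> real_of_int (int (be lam n) + n + 1)" by linarith
    then have r: "real (al lam n) \<ge> real (be lam n) + real_of_int n + 1" by simp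
    have "omega lam x = 2 * real (al lam n) - x" using ox r x by simp
    moreover have "omega lam (real_of_int n) = 2 * real (al lam n) - real_of_int n" using on r by simp
    ultimately show ?thesis using False by (simp add: sg_def)
  qed
qed

lemma omega_ge_abs:
  assumes part: "is_partition lam" shows "\<bar>x\<bar> \<le> omega lam x"
proof -
  have "omega lam x = max (2 * real (al lam \<lfloor>x\<rfloor>) - x) (2 * real (be lam \<lfloor>x\<rfloor>) + x)"
    by (rule omega_piece[OF part]) linarith+
  then show ?thesis by simp
qed

lemma ne_len: "lam \<noteq> [] \<Longrightarrow> 1 \<le> length lam"
  by (cases lam) auto

lemma lam0_pos: assumes part: "is_partition lam" and ne: "lam \<noteq> []" shows "1 \<le> lam ! 0"
  using yl_pos[OF part, of 1] ne_len[OF ne] by (simp add: yl_def)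

lemma young_b_le: assumes part: "is_partition lam" and ne: "lam \<noteq> []" and ab: "(a,b) \<in> young lam"
  shows "b \<le> lam ! 0"
proof -
  have "b \<le> yl lam a" "1 \<le> a" using ab by (auto simp: young_yl)
  moreover have "yl lam a \<le> yl lam 1" using yl_mono[OF part, of 1 a] \<open>1 \<le> a\<close> by simp
  ultimately show ?thesis using ne_len[OF ne] by (simp add: yl_def split: if_splits)
qed

lemma young_a_le: "(a,b) \<in> young lam \<Longrightarrow> a \<le> length lam \<and> 1 \<le> b \<and> 1 \<le> a"
  by (auto simp: young_def)

lemma al_left: assumes part: "is_partition lam" and ne: "lam \<noteq> []" and n: "n \<le> - int (lam ! 0)"
  shows "al lam n = 0"
proof (rule ccontr)
  assume "al lam n \<noteq> 0"
  with al_in[of lam n] obtain b where b: "(al lam n, b) \<in> young lam" "int (al lam n) - int b = n" by auto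
  have "b \<le> lam ! 0" by (rule young_b_le[OF part ne b(1)])
  moreover have "1 \<le> al lam n" using b(1) by (auto simp: young_def)
  ultimately show False using b(2) n by linarith
qed

lemma be_left: assumes part: "is_partition lam" and ne: "lam \<noteq> []" and n: "n + 1 \<le> - int (lam ! 0)"
  shows "be lam n = 0"
proof (rule ccontr)
  assume "be lam n \<noteq> 0"
  with be_in[of lam n] obtain a where a: "(a, be lam n) \<in> young lam" "int a - int (be lam n) = n + 1" by auto
  have "be lam n \<le> lam ! 0" by (rule young_b_le[OF part ne a(1)])
  moreover have "1 \<le> a" using a(1) by (auto simp: young_def)
  ultimately show False using a(2) n by linarith
qed

lemma al_right: assumes n: "int (length lam) - 1 < n" shows "al lam n = 0"
proof (rule ccontr)
  assume "al lam n \<noteq> 0"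
  with al_in[of lam n] obtain b where b: "(al lam n, b) \<in> young lam" "int (al lam n) - int b = n" by auto
  then show False using young_a_le[OF b(1)] n by linarith
qed

lemma be_right: assumes n: "int (length lam) - 1 \<le> n" shows "be lam n = 0"
proof (rule ccontr)
  assume "be lam n \<noteq> 0"
  with be_in[of lam n] obtain a where a: "(a, be lam n) \<in> young lam" "int a - int (be lam n) = n + 1" by auto
  then show False using young_a_le[OF a(1)] n by linarith
qed

lemma omega_left: assumes part: "is_partition lam" and ne: "lam \<noteq> []"
  and x: "x \<le> - real (lam ! 0)" shows "omega lam x = - x"
proof -
  define n where "n = \<lceil>x\<rceil> - 1"
  have xn: "real_of_int n \<le> x" "x \<le> real_of_int n + 1" unfolding n_def by linarith+
  have "n + 1 \<le> - int (lam ! 0)" unfolding n_def using x by linarith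
  then have "al lam n = 0" "be lam n = 0" using al_left[OF part ne] be_left[OF part ne] by auto
  moreover have "x \<le> 0" using x by simp
  ultimately show ?thesis using omega_piece[OF part xn] by simp
qed

lemma omega_right: assumes part: "is_partition lam"
  and x: "real (length lam) \<le> x" shows "omega lam x = x"
proof -
  define n where "n = \<lfloor>x\<rfloor>"
  have xn: "real_of_int n \<le> x" "x \<le> real_of_int n + 1" unfolding n_def by linarith+
  have "int (length lam) \<le> n" unfolding n_def using x by linarith
  then have "al lam n = 0" "be lam n = 0" using al_right be_right by auto
  moreover have "0 \<le> x" using x by simp
  ultimately show ?thesis using omega_piece[OF part xn] by simp
qed

lemma sg_L: assumes part: "is_partition lam" and ne: "lam \<noteq> []"
  shows "sg lam (- int (lam ! 0)) = 1"
proof -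
  have "al lam (- int (lam ! 0)) = 0" by (rule al_left[OF part ne]) simp
  moreover have "(1, lam ! 0) \<in> young lam" using lam0_pos[OF part ne] ne_len[OF ne] by (auto simp: young_def)
  then have "lam ! 0 \<le> be lam (- int (lam ! 0))" by (rule be_ge) simp
  ultimately show ?thesis by (simp add: sg_def)
qed

lemma sg_R: assumes part: "is_partition lam" and ne: "lam \<noteq> []"
  shows "sg lam (int (length lam) - 1) = -1"
proof -
  have "be lam (int (length lam) - 1) = 0" by (rule be_right) simp
  moreover have "(length lam, 1) \<in> young lam" using yl_pos[OF part, of "length lam"] ne_len[OF ne]
    by (auto simp: young_yl)
  then have "length lam \<le> al lam (int (length lam) - 1)" by (rule al_ge) simp
  ultimately show ?thesis using ne by (simp add: sg_def)
qed

lemma omega0_pos: assumes part: "is_partition lam" and ne: "lam \<noteq> []"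
  shows "0 < omega lam 0"
proof -
  have "(1, 1) \<in> young lam" using lam0_pos[OF part ne] ne_len[OF ne] by (auto simp: young_def)
  then have "1 \<le> al lam 0" by (rule al_ge) simp
  moreover have "omega lam 0 = max (2 * real (al lam 0) - 0) (2 * real (be lam 0) + 0)"
    by (rule omega_piece[OF part]) auto
  ultimately show ?thesis by simp
qed

lemma up_pos: assumes part: "is_partition lam" and s: "sg lam n = 1"
  shows "\<exists>a\<ge>1. n = int a - 1 - int (yl lam a)"
proof -
  have h: "int (al lam n) \<le> int (be lam n) + n" using s by (simp add: sg_def split: if_splits)
  define a where "a = nat (int (be lam n) + n + 1)"
  have a1: "1 \<le> a" and ai: "int a = int (be lam n) + n + 1" using h by (auto simp: a_def)
  have ge: "be lam n \<le> yl lam a"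
  proof (cases "be lam n = 0")
    case False
    with be_in[of lam n] obtain a0 where a0: "(a0, be lam n) \<in> young lam" "int a0 - int (be lam n) = n + 1" by auto
    then have "a0 = a" using ai by linarith
    then show ?thesis using a0 by (simp add: young_yl)
  qed simp
  have le: "yl lam a \<le> be lam n"
  proof (rule ccontr)
    assume "\<not> ?thesis"
    then have "(a, be lam n + 1) \<in> young lam" using a1 by (simp add: young_yl)
    then have "a \<le> al lam n" by (rule al_ge) (use ai in simp)
    then show False using h ai by linarith
  qed
  show ?thesis using a1 ai ge le by (intro exI[of _ a]) auto
qed

lemma up_step: assumes part: "is_partition lam" and a: "1 \<le> a" "1 \<le> a'"
  and n: "n = int a - 1 - int (yl lam a)" and n': "n + 1 = int a' - 1 - int (yl lam a')"
  shows "a' = a + 1 \<and> yl lam a' = yl lam a"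
proof -
  have "a < a'"
  proof (rule ccontr)
    assume "\<not> a < a'"
    then have "yl lam a \<le> yl lam a'" using yl_mono[OF part a(2)] by simp
    then show False using n n' \<open>\<not> a < a'\<close> by linarith
  qed
  moreover have "yl lam a' \<le> yl lam a" using yl_mono[OF part a(1)] \<open>a < a'\<close> by simp
  ultimately show ?thesis using n n' by linarith
qed

lemma run_bound: assumes part: "is_partition lam" and reg: "e_regular e lam" and e: "1 \<le> e"
  and all: "\<forall>j<e. sg lam (n + int j) = 1"
  shows "int (length lam) \<le> n"
proof -
  obtain a0 where a0: "1 \<le> a0" "n = int a0 - 1 - int (yl lam a0)"
    using up_pos[OF part, of n] all[rule_format, of 0] e by auto
  have ind: "j < e \<Longrightarrow> n + int j = int (a0 + j) - 1 - int (yl lam (a0 + j)) \<and> yl lam (a0 + j) = yl lam a0" for j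
  proof (induction j)
    case 0 then show ?case using a0 by simp
  next
    case (Suc j)
    then have IH: "n + int j = int (a0 + j) - 1 - int (yl lam (a0 + j))" "yl lam (a0 + j) = yl lam a0" by auto
    obtain a' where a': "1 \<le> a'" "n + int (Suc j) = int a' - 1 - int (yl lam a')"
      using up_pos[OF part, of "n + int (Suc j)"] all Suc.prems by blast
    have "a' = a0 + j + 1 \<and> yl lam a' = yl lam (a0 + j)"
      by (rule up_step[OF part _ a'(1) IH(1)]) (use a0 a' in auto)
    then show ?case using IH a' by auto
  qed
  have last: "yl lam (a0 + (e - 1)) = yl lam a0" using ind[of "e - 1"] e by simp
  show ?thesis
  proof (cases "a0 + (e - 1) \<le> length lam")
    case True
    have "a0 - 1 + e - 1 < length lam" using True e a0 by linarith
    then have "lam ! (a0 - 1) > lam ! (a0 - 1 + e - 1)" using reg by (simp add: e_regular_def)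
    moreover have "yl lam a0 = lam ! (a0 - 1)" using True a0 by (simp add: yl_def)
    moreover have "yl lam (a0 + (e - 1)) = lam ! (a0 - 1 + e - 1)" using True a0 e
      by (simp add: yl_def)
    ultimately show ?thesis using last by simp
  next
    case False
    then have "yl lam a0 = 0" using last by (simp add: yl_def)
    then have "\<not> a0 \<le> length lam" using yl_pos[OF part a0(1)] by auto
    then show ?thesis using a0 \<open>yl lam a0 = 0\<close> by linarith
  qed
qed




locale prof =
  fixes e :: nat and lam :: "nat list" and sl :: "int \<Rightarrow> real" and L R :: int
  assumes e2: "2 \<le> e"
  and aff: "\<And>n x. real_of_int n \<le> x \<Longrightarrow> x \<le> real_of_int n + 1 \<Longrightarrow>
              omega lam x = omega lam (real_of_int n) + sl n * (x - real_of_int n)"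
  and spm: "\<And>n. sl n = 1 \<or> sl n = -1"
  and left: "\<And>x. x \<le> real_of_int L \<Longrightarrow> omega lam x = - x"
  and right: "\<And>x. real_of_int R \<le> x \<Longrightarrow> omega lam x = x"
  and Lneg: "L < 0" and Rpos: "0 < R"
  and sL: "sl L = 1" and sR: "sl (R - 1) = -1"
  and run: "\<And>n. (\<forall>j<e. sl (n + int j) = 1) \<Longrightarrow> R \<le> n"
  and geabs: "\<And>x. \<bar>x\<bar> \<le> omega lam x"
  and pos0: "0 < omega lam 0"
begin

abbreviation "A \<equiv> alpha e"

lemma A_facts: "0 \<le> A" "A < 1" "1 - A = 2 / real e" "(1 - A) * (real e - 1) = 1 + A" "1 + A \<le> real e"
proof -
  have e: "2 \<le> real e" using e2 by simp
  then have e0: "0 < real e" by simp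
  show "0 \<le> A" using e by (simp add: alpha_def field_simps)
  show "A < 1" using e by (simp add: alpha_def field_simps)
  show "1 - A = 2 / real e" by (simp add: alpha_def)
  show "(1 - A) * (real e - 1) = 1 + A" using e0 by (simp add: alpha_def field_simps)
  have "0 \<le> 2 / real e" by simp
  then show "1 + A \<le> real e" unfolding alpha_def using e by linarith
qed

definition FF :: "real \<Rightarrow> real" where "FF x = omega lam x - A * x"

lemma sl_left: assumes "n < L" shows "sl n = -1"
proof -
  have "omega lam (real_of_int n + 1) = omega lam (real_of_int n) + sl n * (real_of_int n + 1 - real_of_int n)"
    by (rule aff) auto
  moreover have "omega lam (real_of_int n + 1) = - (real_of_int n + 1)" using assms by (intro left) simp
  moreover have "omega lam (real_of_int n) = - real_of_int n" using assms by (intro left) simp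
  ultimately show ?thesis by simp
qed

lemma sl_right: assumes "R \<le> n" shows "sl n = 1"
proof -
  have "omega lam (real_of_int n + 1) = omega lam (real_of_int n) + sl n * (real_of_int n + 1 - real_of_int n)"
    by (rule aff) auto
  moreover have "omega lam (real_of_int n + 1) = real_of_int n + 1" using assms by (intro right) simp
  moreover have "omega lam (real_of_int n) = real_of_int n" using assms by (intro right) simp
  ultimately show ?thesis by simp
qed

lemma lin_run:
  assumes pq: "p \<le> q" and sc: "\<And>m. p \<le> m \<Longrightarrow> m < q \<Longrightarrow> sl m = c"
    and x: "real_of_int p \<le> x" "x \<le> real_of_int q"
  shows "omega lam x = omega lam (real_of_int p) + c * (x - real_of_int p)"
proof -
  have main: "k \<le> q \<longrightarrow> (\<forall>x. real_of_int p \<le> x \<and> x \<le> real_of_int k \<longrightarrow>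
      omega lam x = omega lam (real_of_int p) + c * (x - real_of_int p))" if "p \<le> k" for k
    using that
  proof (induction k rule: int_ge_induct)
    case base
    show ?case
    proof (intro impI allI)
      fix x assume "real_of_int p \<le> x \<and> x \<le> real_of_int p"
      then have "x = real_of_int p" by simp
      then show "omega lam x = omega lam (real_of_int p) + c * (x - real_of_int p)" by simp
    qed
  next
    case (step k)
    show ?case
    proof (intro impI allI)
      fix x assume kq: "k + 1 \<le> q" and xx: "real_of_int p \<le> x \<and> x \<le> real_of_int (k + 1)"
      have kq': "k \<le> q" using kq by simp
      have IH: "\<forall>x. real_of_int p \<le> x \<and> x \<le> real_of_int k \<longrightarrow>
          omega lam x = omega lam (real_of_int p) + c * (x - real_of_int p)" using step.IH kq' by (rule mp)
      show "omega lam x = omega lam (real_of_int p) + c * (x - real_of_int p)"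
      proof (cases "x \<le> real_of_int k")
        case True
        then show ?thesis using IH[rule_format, of x] xx by blast
      next
        case False
        have "omega lam x = omega lam (real_of_int k) + sl k * (x - real_of_int k)"
          by (rule aff) (use False xx in auto)
        moreover have "sl k = c" using sc step.hyps kq by simp
        moreover have "omega lam (real_of_int k) = omega lam (real_of_int p) + c * (real_of_int k - real_of_int p)"
          using IH[rule_format, of "real_of_int k"] step.hyps by simp
        ultimately show ?thesis by (simp add: algebra_simps)
      qed
    qed
  qed
  have "\<forall>x. real_of_int p \<le> x \<and> x \<le> real_of_int q \<longrightarrow>
      omega lam x = omega lam (real_of_int p) + c * (x - real_of_int p)"
    using main[OF pq] order_refl[of q] by (rule mp)
  then show ?thesis using x by blast
qed

lemma piece_mono:
  fixes g :: "real \<Rightarrow> real"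
  assumes pc: "\<And>n x y. real_of_int n \<le> x \<Longrightarrow> x \<le> y \<Longrightarrow> y \<le> real_of_int n + 1 \<Longrightarrow> g y \<le> g x"
    and xy: "x \<le> y"
  shows "g y \<le> g x"
proof -
  have "\<forall>y. \<lfloor>y\<rfloor> = m \<and> x \<le> y \<longrightarrow> g y \<le> g x" if "\<lfloor>x\<rfloor> \<le> m" for m
    using that
  proof (induction m rule: int_ge_induct)
    case base
    show ?case
    proof (intro allI impI)
      fix y assume "\<lfloor>y\<rfloor> = \<lfloor>x\<rfloor> \<and> x \<le> y"
      then show "g y \<le> g x" by (intro pc[of "\<lfloor>x\<rfloor>"]) linarith+
    qed
  next
    case (step n)
    show ?case
    proof (intro allI impI)
      fix y assume y: "\<lfloor>y\<rfloor> = n + 1 \<and> x \<le> y"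
      have "g y \<le> g (real_of_int (n + 1))" using y by (intro pc[of "n + 1"]) linarith+
      moreover have "g (real_of_int (n + 1)) \<le> g x"
      proof (cases "real_of_int n \<le> x")
        case True
        have "x \<le> real_of_int n + 1" using step.hyps by linarith
        then show ?thesis using True by (intro pc[of n]) auto
      next
        case False
        have "g (real_of_int (n + 1)) \<le> g (real_of_int n)" by (intro pc[of n]) auto
        moreover have "g (real_of_int n) \<le> g x" using step.IH False by auto
        ultimately show ?thesis by linarith
      qed
      ultimately show "g y \<le> g x" by linarith
    qed
  qed
  moreover have "\<lfloor>x\<rfloor> \<le> \<lfloor>y\<rfloor>" using xy by (rule floor_mono)
  ultimately show ?thesis using xy by blast
qed

lemma om_piece_diff:
  assumes "real_of_int n \<le> x" "x \<le> y" "y \<le> real_of_int n + 1"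
  shows "omega lam y - omega lam x = sl n * (y - x)"
  using aff[of n x] aff[of n y] assms by (simp add: algebra_simps)

lemma om_lip1: "x \<le> y \<Longrightarrow> omega lam y - omega lam x \<le> y - x"
proof -
  assume xy: "x \<le> y"
  have "(\<lambda>z. omega lam z - z) y \<le> (\<lambda>z. omega lam z - z) x"
  proof (rule piece_mono[OF _ xy])
    fix n x y assume h: "real_of_int n \<le> x" "x \<le> y" "y \<le> real_of_int n + 1"
    show "omega lam y - y \<le> omega lam x - x"
      using om_piece_diff[OF h] spm[of n] h by auto
  qed
  then show ?thesis by simp
qed

lemma om_lip2: "x \<le> y \<Longrightarrow> omega lam x - omega lam y \<le> y - x"
proof -
  assume xy: "x \<le> y"
  have "(\<lambda>z. - omega lam z - z) y \<le> (\<lambda>z. - omega lam z - z) x"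
  proof (rule piece_mono[OF _ xy])
    fix n x y assume h: "real_of_int n \<le> x" "x \<le> y" "y \<le> real_of_int n + 1"
    show "- omega lam y - y \<le> - omega lam x - x"
      using om_piece_diff[OF h] spm[of n] h by auto
  qed
  then show ?thesis by simp
qed

lemma om_lip: "\<bar>omega lam x - omega lam y\<bar> \<le> \<bar>x - y\<bar>"
proof (cases "x \<le> y")
  case True
  then show ?thesis using om_lip1[of x y] om_lip2[of x y] by linarith
next
  case False
  then have "y \<le> x" by simp
  then show ?thesis using om_lip1[of y x] om_lip2[of y x] by linarith
qed

lemma FF_lip: "\<bar>FF x - FF y\<bar> \<le> 2 * \<bar>x - y\<bar>"
proof -
  have "\<bar>FF x - FF y\<bar> = \<bar>(omega lam x - omega lam y) - A * (x - y)\<bar>" by (simp add: FF_def algebra_simps)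
  also have "\<dots> \<le> \<bar>omega lam x - omega lam y\<bar> + \<bar>A * (x - y)\<bar>" by (rule abs_triangle_ineq4)
  finally have 1: "\<bar>FF x - FF y\<bar> \<le> \<bar>omega lam x - omega lam y\<bar> + \<bar>A * (x - y)\<bar>" .
  have "\<bar>A * (x - y)\<bar> = A * \<bar>x - y\<bar>" using A_facts(1) by (simp add: abs_mult)
  also have "\<dots> \<le> 1 * \<bar>x - y\<bar>" using A_facts(2) by (intro mult_right_mono) auto
  finally have 2: "\<bar>A * (x - y)\<bar> \<le> \<bar>x - y\<bar>" by simp
  have "\<bar>FF x - FF y\<bar> \<le> \<bar>x - y\<bar> + \<bar>x - y\<bar>"
    using 1 add_mono[OF om_lip[of x y] 2] by (rule order_trans)
  then show ?thesis by simp
qed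

lemma cont_om: "continuous_on UNIV (omega lam)"
proof -
  have "1-lipschitz_on UNIV (omega lam)"
    by (rule lipschitz_onI) (use om_lip in \<open>auto simp: dist_real_def\<close>)
  then show ?thesis by (rule lipschitz_on_continuous_on)
qed

end




context prof
begin

definition Mx :: "real \<Rightarrow> real \<Rightarrow> real" where "Mx s c = Sup (FF ` {s..c})"

lemma Mx_bdd: "bdd_above (FF ` {s..c})"
proof -
  have "FF t \<le> FF s + 2 * \<bar>c - s\<bar>" if "t \<in> {s..c}" for t
    using FF_lip[of t s] that by auto
  then show ?thesis unfolding bdd_above_def by (intro exI[of _ "FF s + 2 * \<bar>c - s\<bar>"]) auto
qed

lemma Mx_ge: "s \<le> t \<Longrightarrow> t \<le> c \<Longrightarrow> FF t \<le> Mx s c"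
  unfolding Mx_def by (rule cSup_upper) (use Mx_bdd in auto)

lemma Mx_le: "s \<le> c \<Longrightarrow> (\<And>t. s \<le> t \<Longrightarrow> t \<le> c \<Longrightarrow> FF t \<le> v) \<Longrightarrow> Mx s c \<le> v"
  unfolding Mx_def by (rule cSup_least) auto

lemma Mx_eqI: "s \<le> t0 \<Longrightarrow> t0 \<le> c \<Longrightarrow> FF t0 = v \<Longrightarrow> (\<And>t. s \<le> t \<Longrightarrow> t \<le> c \<Longrightarrow> FF t \<le> v) \<Longrightarrow> Mx s c = v"
  using Mx_ge[of s t0 c] Mx_le[of s c v] by force

lemma Mx_mono: "s \<le> s' \<Longrightarrow> s' \<le> c \<Longrightarrow> Mx s' c \<le> Mx s c"
  by (rule Mx_le) (auto intro: Mx_ge)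

lemma Mx_mono2: "s \<le> c0 \<Longrightarrow> c0 \<le> c \<Longrightarrow> Mx s c0 \<le> Mx s c"
  by (rule Mx_le) (auto intro: Mx_ge)

lemma Mx_self: "Mx c c = FF c"
  by (rule Mx_eqI[of c c]) auto

lemma Mx_geFF: "s \<le> c \<Longrightarrow> FF s \<le> Mx s c"
  by (rule Mx_ge) auto

lemma Mx_lip: assumes "s \<le> s'" "s' \<le> c" shows "Mx s c \<le> Mx s' c + 2 * (s' - s)"
proof (rule Mx_le)
  show "s \<le> c" using assms by simp
  fix t assume t: "s \<le> t" "t \<le> c"
  show "FF t \<le> Mx s' c + 2 * (s' - s)"
  proof (cases "s' \<le> t")
    case True
    then have "FF t \<le> Mx s' c" using t by (intro Mx_ge) auto
    then show ?thesis using assms by simp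
  next
    case False
    have "FF t \<le> FF s' + 2 * \<bar>t - s'\<bar>" using FF_lip[of t s'] by simp
    moreover have "FF s' \<le> Mx s' c" using assms by (intro Mx_geFF) simp
    ultimately show ?thesis using False t by simp
  qed
qed

definition W :: "int \<Rightarrow> real \<Rightarrow> real" where
  "W c s = (if s \<le> real_of_int c then A * s + Mx s (real_of_int c) else omega lam s)"

lemma W_at: "W c (real_of_int c) = omega lam (real_of_int c)"
  by (simp add: W_def Mx_self FF_def)

lemma W_lip_le: assumes "x \<le> y" shows "\<bar>W c x - W c y\<bar> \<le> 3 * (y - x)"
proof -
  have lowc: "\<bar>W c x - W c y\<bar> \<le> 3 * (y - x)" if "x \<le> y" "y \<le> real_of_int c" for x y
  proof -
    have "Mx y (real_of_int c) \<le> Mx x (real_of_int c)" using that by (intro Mx_mono)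
    moreover have "Mx x (real_of_int c) \<le> Mx y (real_of_int c) + 2 * (y - x)" using that by (intro Mx_lip)
    moreover have "0 \<le> A * (y - x)" using A_facts(1) that by simp
    moreover have "A * (y - x) \<le> 1 * (y - x)" using A_facts(2) that by (intro mult_right_mono) auto
    moreover have "W c x - W c y = A * x - A * y + (Mx x (real_of_int c) - Mx y (real_of_int c))"
      using that by (simp add: W_def)
    ultimately show ?thesis by (simp add: algebra_simps abs_le_iff)
  qed
  show ?thesis
  proof (cases "y \<le> real_of_int c")
    case True then show ?thesis using lowc assms by simp
  next
    case yc: False
    show ?thesis
    proof (cases "x \<le> real_of_int c")
      case True
      have 1: "\<bar>W c x - W c (real_of_int c)\<bar> \<le> 3 * (real_of_int c - x)" using True by (intro lowc) auto
      have 2: "\<bar>W c (real_of_int c) - W c y\<bar> \<le> y - real_of_int c"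
        using om_lip[of "real_of_int c" y] yc by (simp add: W_at) (simp add: W_def)
      have "\<bar>W c x - W c y\<bar> \<le> \<bar>W c x - W c (real_of_int c)\<bar> + \<bar>W c (real_of_int c) - W c y\<bar>"
        using abs_triangle_ineq[of "W c x - W c (real_of_int c)" "W c (real_of_int c) - W c y"] by simp
      then have "\<bar>W c x - W c y\<bar> \<le> 3 * (real_of_int c - x) + (y - real_of_int c)"
        using add_mono[OF 1 2] by (rule order_trans)
      also have "\<dots> \<le> 3 * (y - x)" using yc by simp
      finally show ?thesis .
    next
      case False
      then show ?thesis using om_lip[of x y] yc assms by (simp add: W_def)
    qed
  qed
qed

lemma W_lip: "\<bar>W c x - W c y\<bar> \<le> 3 * \<bar>x - y\<bar>"
proof (cases "x \<le> y")
  case True then show ?thesis using W_lip_le[of x y c] by simp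
next
  case False then show ?thesis using W_lip_le[of y x c] by (simp add: abs_minus_commute)
qed

lemma cont_W: "continuous_on UNIV (W c)"
proof -
  have "3-lipschitz_on UNIV (W c)"
    by (rule lipschitz_onI) (use W_lip in \<open>auto simp: dist_real_def\<close>)
  then show ?thesis by (rule lipschitz_on_continuous_on)
qed

end




context prof
begin

lemma struct:
  assumes c0c: "c0 < c" and s0: "sl c0 = -1" and s1: "sl (c - 1) = 1" and s2: "sl c = -1"
    and noc: "\<And>m. c0 < m \<Longrightarrow> m < c \<Longrightarrow> \<not> (sl (m - 1) = 1 \<and> sl m = -1)"
  obtains i where "c0 < i" "i < c" "c - i \<le> int e - 1"
    "\<And>x. real_of_int c0 \<le> x \<Longrightarrow> x \<le> real_of_int i \<Longrightarrow> omega lam x = omega lam (real_of_int c0) - (x - real_of_int c0)"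
    "\<And>x. real_of_int i \<le> x \<Longrightarrow> x \<le> real_of_int c \<Longrightarrow> omega lam x = omega lam (real_of_int i) + (x - real_of_int i)"
proof -
  define I where "I = {m. c0 < m \<and> m \<le> c - 1 \<and> sl m = 1}"
  have finI: "finite I" by (rule finite_subset[of _ "{c0..c}"]) (auto simp: I_def)
  have cI: "c - 1 \<in> I"
  proof -
    have "c - 1 \<noteq> c0" using s0 s1 by auto
    then show ?thesis using c0c s1 by (auto simp: I_def)
  qed
  define i where "i = Min I"
  have iI: "i \<in> I" unfolding i_def using finI cI by (intro Min_in) auto
  have imin: "\<And>m. m \<in> I \<Longrightarrow> i \<le> m" unfolding i_def using finI by simp
  have down: "sl m = -1" if "c0 \<le> m" "m < i" for m
  proof (cases "m = c0")
    case True then show ?thesis using s0 by simp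
  next
    case False
    have "m \<notin> I" using imin that by force
    then have "sl m \<noteq> 1" using that False iI by (auto simp: I_def)
    then show ?thesis using spm[of m] by simp
  qed
  have up0: "m \<le> c - 1 \<longrightarrow> sl m = 1" if "i \<le> m" for m
    using that
  proof (induction m rule: int_ge_induct)
    case base then show ?case using iI by (simp add: I_def)
  next
    case (step m)
    show ?case
    proof
      assume m1: "m + 1 \<le> c - 1"
      then have "sl m = 1" using step by simp
      moreover have "c0 < m + 1" using step.hyps iI by (simp add: I_def)
      ultimately have "sl (m + 1) \<noteq> -1" using noc[of "m + 1"] m1 by simp
      then show "sl (m + 1) = 1" using spm[of "m + 1"] by simp
    qed
  qed
  have up: "sl m = 1" if "i \<le> m" "m < c" for m using up0[OF that(1)] that(2) by simp
  have ic: "c0 < i" "i < c" using iI by (auto simp: I_def)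
  have len: "c - i \<le> int e - 1"
  proof (rule ccontr)
    assume "\<not> ?thesis"
    then have ce: "int e \<le> c - i" by simp
    have "\<forall>j<e. sl (c - int e + int j) = 1"
    proof (intro allI impI)
      fix j assume "j < e"
      then show "sl (c - int e + int j) = 1" using ce by (intro up) auto
    qed
    then have "R \<le> c - int e" by (rule run)
    then have "sl c = 1" using sl_right[of c] by simp
    then show False using s2 by simp
  qed
  show ?thesis
  proof (rule that[OF ic len])
    fix x assume "real_of_int c0 \<le> x" "x \<le> real_of_int i"
    then show "omega lam x = omega lam (real_of_int c0) - (x - real_of_int c0)"
      using lin_run[of c0 i "-1" x] down ic by force
  next
    fix x assume "real_of_int i \<le> x" "x \<le> real_of_int c"
    then show "omega lam x = omega lam (real_of_int i) + (x - real_of_int i)"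
      using lin_run[of i c 1 x] up ic by force
  qed
qed


lemma FFc_le:
  assumes c0c: "c0 < c" and s0: "sl c0 = -1" and s1: "sl (c - 1) = 1" and s2: "sl c = -1"
    and noc: "\<And>m. c0 < m \<Longrightarrow> m < c \<Longrightarrow> \<not> (sl (m - 1) = 1 \<and> sl m = -1)"
  shows "\<forall>t. real_of_int c0 \<le> t \<and> t \<le> real_of_int c \<longrightarrow> FF t \<le> FF (real_of_int c0)"
    and "FF (real_of_int c) \<le> FF (real_of_int c0)"
    and "(\<forall>s t. s \<le> t \<and> t \<le> real_of_int c0 \<longrightarrow> FF t - FF s \<le> 1 + A) \<Longrightarrow>
         (\<forall>s t. s \<le> t \<and> t \<le> real_of_int c \<longrightarrow> FF t - FF s \<le> 1 + A)"
proof -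
  obtain i where ic: "c0 < i" "i < c" "c - i \<le> int e - 1"
    and lin1: "\<And>x. real_of_int c0 \<le> x \<Longrightarrow> x \<le> real_of_int i \<Longrightarrow> omega lam x = omega lam (real_of_int c0) - (x - real_of_int c0)"
    and lin2: "\<And>x. real_of_int i \<le> x \<Longrightarrow> x \<le> real_of_int c \<Longrightarrow> omega lam x = omega lam (real_of_int i) + (x - real_of_int i)"
    using struct[OF assms] by blast
  have F1: "FF x = FF (real_of_int c0) - (1 + A) * (x - real_of_int c0)"
    if "real_of_int c0 \<le> x" "x \<le> real_of_int i" for x
    using lin1[OF that] by (simp add: FF_def algebra_simps)
  have F2: "FF x = FF (real_of_int i) + (1 - A) * (x - real_of_int i)"
    if "real_of_int i \<le> x" "x \<le> real_of_int c" for x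
    using lin2[OF that] by (simp add: FF_def algebra_simps)
  have Ap: "0 \<le> 1 + A" "0 \<le> 1 - A" using A_facts by auto
  have ci: "real_of_int c - real_of_int i \<le> real e - 1" using ic(3)
    by (metis of_int_diff of_int_le_iff of_int_of_nat_eq of_int_1)
  have rise: "(1 - A) * (real_of_int c - real_of_int i) \<le> 1 + A"
  proof -
    have "(1 - A) * (real_of_int c - real_of_int i) \<le> (1 - A) * (real e - 1)"
      using ci Ap by (intro mult_left_mono) auto
    then show ?thesis using A_facts(4) by simp
  qed
  have fall: "1 + A \<le> (1 + A) * (real_of_int i - real_of_int c0)"
  proof -
    have "1 \<le> real_of_int i - real_of_int c0" using ic(1) by linarith
    then show ?thesis using Ap by (metis mult_left_mono mult.right_neutral)
  qed
  have FFc: "FF (real_of_int c) \<le> FF (real_of_int c0)"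
  proof -
    have "FF (real_of_int c) = FF (real_of_int i) + (1 - A) * (real_of_int c - real_of_int i)"
      using ic by (intro F2) auto
    moreover have "FF (real_of_int i) = FF (real_of_int c0) - (1 + A) * (real_of_int i - real_of_int c0)"
      using ic by (intro F1) auto
    ultimately show ?thesis using rise fall by linarith
  qed
  show "FF (real_of_int c) \<le> FF (real_of_int c0)" by (rule FFc)
  have Q1: "FF t \<le> FF (real_of_int c0)" if "real_of_int c0 \<le> t" "t \<le> real_of_int c" for t
  proof (cases "t \<le> real_of_int i")
    case True
    then show ?thesis using F1[OF that(1) True] Ap that by (simp add: mult_nonneg_nonneg)
  next
    case False
    have "FF t = FF (real_of_int i) + (1 - A) * (t - real_of_int i)" using False that by (intro F2) auto
    moreover have "FF (real_of_int c) = FF (real_of_int i) + (1 - A) * (real_of_int c - real_of_int i)"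
      using ic by (intro F2) auto
    moreover have "(1 - A) * (t - real_of_int i) \<le> (1 - A) * (real_of_int c - real_of_int i)"
      using that Ap by (intro mult_left_mono) auto
    ultimately show ?thesis using FFc by linarith
  qed
  then show "\<forall>t. real_of_int c0 \<le> t \<and> t \<le> real_of_int c \<longrightarrow> FF t \<le> FF (real_of_int c0)" by blast
  assume IH: "\<forall>s t. s \<le> t \<and> t \<le> real_of_int c0 \<longrightarrow> FF t - FF s \<le> 1 + A"
  show "\<forall>s t. s \<le> t \<and> t \<le> real_of_int c \<longrightarrow> FF t - FF s \<le> 1 + A"
  proof (intro allI impI)
    fix s t assume st: "s \<le> t \<and> t \<le> real_of_int c"
    show "FF t - FF s \<le> 1 + A"
    proof (cases "t \<le> real_of_int c0")
      case True then show ?thesis using IH st by blast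
    next
      case tc0: False
      show ?thesis
      proof (cases "s \<le> real_of_int c0")
        case True
        have "FF t \<le> FF (real_of_int c0)" using Q1 tc0 st by simp
        moreover have "FF (real_of_int c0) - FF s \<le> 1 + A" using IH True by blast
        ultimately show ?thesis by linarith
      next
        case sc0: False
        show ?thesis
        proof (cases "t \<le> real_of_int i")
          case True
          have "FF t = FF (real_of_int c0) - (1 + A) * (t - real_of_int c0)" using True tc0 by (intro F1) auto
          moreover have "FF s = FF (real_of_int c0) - (1 + A) * (s - real_of_int c0)" using True sc0 st by (intro F1) auto
          moreover have "(1 + A) * (s - real_of_int c0) \<le> (1 + A) * (t - real_of_int c0)"
            using st Ap by (intro mult_left_mono) auto
          ultimately show ?thesis using Ap by linarith
        next
          case ti: False
          have Ft: "FF t = FF (real_of_int i) + (1 - A) * (t - real_of_int i)" using ti st by (intro F2) auto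
          have "(1 - A) * (t - real_of_int i) \<le> (1 - A) * (real_of_int c - real_of_int i)"
            using st Ap by (intro mult_left_mono) auto
          show ?thesis
          proof (cases "s \<le> real_of_int i")
            case True
            have "FF s = FF (real_of_int c0) - (1 + A) * (s - real_of_int c0)" using True sc0 by (intro F1) auto
            moreover have "FF (real_of_int i) = FF (real_of_int c0) - (1 + A) * (real_of_int i - real_of_int c0)"
              using ic by (intro F1) auto
            moreover have "(1 + A) * (s - real_of_int c0) \<le> (1 + A) * (real_of_int i - real_of_int c0)"
              using True Ap by (intro mult_left_mono) auto
            ultimately show ?thesis using Ft rise \<open>(1 - A) * (t - real_of_int i) \<le> _\<close> by linarith
          next
            case False
            have Fs: "FF s = FF (real_of_int i) + (1 - A) * (s - real_of_int i)" using False st by (intro F2) auto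
            have "(1 - A) * (t - real_of_int i) - (1 - A) * (s - real_of_int i) = (1 - A) * (t - s)"
              by (simp add: algebra_simps)
            moreover have "(1 - A) * (t - s) \<le> (1 - A) * (real_of_int c - real_of_int i)"
              using st False Ap by (intro mult_left_mono) auto
            ultimately show ?thesis using Ft Fs rise by linarith
          qed
        qed
      qed
    qed
  qed
qed


lemma flat:
  assumes c0c: "c0 < c" and s0: "sl c0 = -1" and s1: "sl (c - 1) = 1" and s2: "sl c = -1"
    and noc: "\<And>m. c0 < m \<Longrightarrow> m < c \<Longrightarrow> \<not> (sl (m - 1) = 1 \<and> sl m = -1)"
  shows "flat_step e lam c (W c0) = W c"
proof -
  obtain i where ic: "c0 < i" "i < c" "c - i \<le> int e - 1"
    and lin1: "\<And>x. real_of_int c0 \<le> x \<Longrightarrow> x \<le> real_of_int i \<Longrightarrow> omega lam x = omega lam (real_of_int c0) - (x - real_of_int c0)"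
    and lin2: "\<And>x. real_of_int i \<le> x \<Longrightarrow> x \<le> real_of_int c \<Longrightarrow> omega lam x = omega lam (real_of_int i) + (x - real_of_int i)"
    using struct[OF assms] by blast
  have ric: "real_of_int c0 < real_of_int i" "real_of_int i < real_of_int c" using ic by auto
  have F1: "FF x = FF (real_of_int c0) - (1 + A) * (x - real_of_int c0)"
    if "real_of_int c0 \<le> x" "x \<le> real_of_int i" for x
    using lin1[OF that] by (simp add: FF_def algebra_simps)
  have F2: "FF x = FF (real_of_int i) + (1 - A) * (x - real_of_int i)"
    if "real_of_int i \<le> x" "x \<le> real_of_int c" for x
    using lin2[OF that] by (simp add: FF_def algebra_simps)
  have Ap: "0 \<le> 1 + A" "0 < 1 - A" using A_facts by auto
  define Fc where "Fc = FF (real_of_int c)"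
  have F2c: "FF x = Fc - (1 - A) * (real_of_int c - x)" if "real_of_int i \<le> x" "x \<le> real_of_int c" for x
  proof -
    have "FF (real_of_int c) = FF (real_of_int i) + (1 - A) * (real_of_int c - real_of_int i)"
      using ric by (intro F2) auto
    then show ?thesis using F2[OF that] unfolding Fc_def by (simp add: algebra_simps)
  qed
  define H where "H s = W c0 s - A * s" for s
  have H_low: "H s = Mx s (real_of_int c0)" if "s \<le> real_of_int c0" for s
    using that by (simp add: H_def W_def)
  have H_high: "H s = FF s" if "real_of_int c0 \<le> s" for s
  proof (cases "s = real_of_int c0")
    case True then show ?thesis by (simp add: H_def W_def Mx_self)
  next
    case False then show ?thesis using that by (simp add: H_def W_def FF_def)
  qed
  have H_geFF: "FF s \<le> H s" for s
  proof (cases "s \<le> real_of_int c0")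
    case True then show ?thesis using H_low Mx_geFF by simp
  next
    case False then show ?thesis using H_high by simp
  qed
  have FF_dec: "FF y \<le> FF x" if "real_of_int c0 \<le> x" "x \<le> y" "y \<le> real_of_int i" for x y
  proof -
    have "(1 + A) * (x - real_of_int c0) \<le> (1 + A) * (y - real_of_int c0)" using that Ap by (intro mult_left_mono) auto
    then show ?thesis using F1[of x] F1[of y] that by linarith
  qed
  have H_mono: "H y \<le> H x" if "x \<le> y" "y \<le> real_of_int i" for x y
  proof (cases "y \<le> real_of_int c0")
    case True then show ?thesis using that H_low Mx_mono by simp
  next
    case yc: False
    show ?thesis
    proof (cases "x \<le> real_of_int c0")
      case True
      have "H y = FF y" using yc by (intro H_high) simp
      also have "\<dots> \<le> FF (real_of_int c0)" using yc that by (intro FF_dec) auto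
      also have "\<dots> = Mx (real_of_int c0) (real_of_int c0)" by (simp add: Mx_self)
      also have "\<dots> \<le> Mx x (real_of_int c0)" using True by (intro Mx_mono) auto
      also have "\<dots> = H x" using True by (simp add: H_low)
      finally show ?thesis .
    next
      case False
      then show ?thesis using H_high[of x] H_high[of y] FF_dec[of x y] that yc by simp
    qed
  qed
  have contH: "continuous_on UNIV H"
    unfolding H_def by (intro continuous_intros cont_W[of c0, THEN continuous_on_subset]) auto
  have H_up: "H s < Fc" if "real_of_int i \<le> s" "s < real_of_int c" for s
  proof -
    have "H s = FF s" using that ric by (intro H_high) simp
    also have "\<dots> = Fc - (1 - A) * (real_of_int c - s)" using that by (intro F2c) auto
    finally show ?thesis using Ap that by (simp add: mult_pos_pos)
  qed
  define slow where "slow = min (real_of_int c0) (real_of_int L) - \<bar>Fc\<bar> - 1"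
  have slow_le: "slow \<le> real_of_int c0" "slow \<le> real_of_int L" "slow \<le> real_of_int i" unfolding slow_def using ric by auto
  have Hslow: "Fc \<le> H slow"
  proof -
    have "FF slow = - slow - A * slow" using left[OF slow_le(2)] by (simp add: FF_def)
    moreover have "slow \<le> 0" using slow_le Lneg by linarith
    then have "0 \<le> - A * slow" using A_facts(1) by (simp add: mult_nonneg_nonpos)
    moreover have "Fc \<le> - slow"
    proof -
      have "Fc \<le> \<bar>Fc\<bar>" by (rule abs_ge_self)
      moreover have "min (real_of_int c0) (real_of_int L) \<le> real_of_int L" by simp
      moreover have "real_of_int L < 0" using Lneg by simp
      ultimately show ?thesis unfolding slow_def by linarith
    qed
    ultimately show ?thesis using H_geFF[of slow] by linarith
  qed
  have Hi: "H (real_of_int i) \<le> Fc" using H_up[of "real_of_int i"] ric by simp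
  obtain s1 where s1: "slow \<le> s1" "s1 \<le> real_of_int i" "H s1 = Fc"
    using IVT2'[of H "real_of_int i" Fc slow] Hi Hslow slow_le contH[THEN continuous_on_subset] by blast
  define P0 where "P0 = {s. s \<le> real_of_int i \<and> H s = Fc}"
  have Peq: "{s. s < real_of_int c \<and> W c0 s = omega lam (real_of_int c) + alpha e * (s - real_of_int c)} = P0"
  proof -
    have eq: "W c0 s = omega lam (real_of_int c) + A * (s - real_of_int c) \<longleftrightarrow> H s = Fc" for s
      by (auto simp: H_def Fc_def FF_def algebra_simps)
    show ?thesis
    proof (intro set_eqI iffI)
      fix s assume "s \<in> {s. s < real_of_int c \<and> W c0 s = omega lam (real_of_int c) + alpha e * (s - real_of_int c)}"
      then have s: "s < real_of_int c" "H s = Fc" using eq by auto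
      have "s \<le> real_of_int i"
      proof (rule ccontr)
        assume "\<not> ?thesis"
        then show False using H_up[of s] s by simp
      qed
      then show "s \<in> P0" using s by (simp add: P0_def)
    next
      fix s assume "s \<in> P0"
      then show "s \<in> {s. s < real_of_int c \<and> W c0 s = omega lam (real_of_int c) + alpha e * (s - real_of_int c)}"
        using eq ric by (auto simp: P0_def)
    qed
  qed
  have closedP0: "closed P0"
  proof -
    have "P0 = {s. s \<le> real_of_int i} \<inter> {s. H s = Fc}" by (auto simp: P0_def)
    moreover have "closed {s::real. s \<le> real_of_int i}" by (rule closed_Collect_le) (auto intro: continuous_intros)
    moreover have "closed {s. H s = Fc}" by (rule closed_Collect_eq) (use contH in \<open>auto intro: continuous_intros\<close>)
    ultimately show ?thesis by auto
  qed
  define hf where "hf = Sup P0"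
  have s1P: "s1 \<in> P0" using s1 by (simp add: P0_def)
  have bddP: "bdd_above P0" by (auto simp: P0_def bdd_above_def)
  have hfP: "hf \<in> P0" unfolding hf_def by (rule closed_contains_Sup) (use s1P bddP closedP0 in auto)
  have hf: "hf \<le> real_of_int i" "H hf = Fc" using hfP by (auto simp: P0_def)
  have fp: "flat_point e lam c (W c0) = hf" unfolding flat_point_def Peq hf_def ..
  have Hb: "Fc \<le> H s" if "s \<le> hf" for s using H_mono[of s hf] that hf by simp
  have Hc: "H s \<le> Fc" if "hf \<le> s" "s \<le> real_of_int i" for s using H_mono[of hf s] that hf by simp
  show ?thesis
  proof
    fix s
    show "flat_step e lam c (W c0) s = W c s"
    proof (cases "hf \<le> s \<and> s \<le> real_of_int c")
      case True
      have "Mx s (real_of_int c) = Fc"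
      proof (rule Mx_eqI[of s "real_of_int c"])
        show "s \<le> real_of_int c" using True by simp
        show "FF (real_of_int c) = Fc" by (simp add: Fc_def)
        show "real_of_int c \<le> real_of_int c" by simp
        fix t assume t: "s \<le> t" "t \<le> real_of_int c"
        show "FF t \<le> Fc"
        proof (cases "t \<le> real_of_int i")
          case True
          then show ?thesis using H_geFF[of t] Hc[of t] t \<open>hf \<le> s \<and> s \<le> real_of_int c\<close> by linarith
        next
          case False
          then show ?thesis using F2c[of t] t Ap by (simp add: mult_nonneg_nonneg)
        qed
      qed
      then show ?thesis using True unfolding flat_step_def fp
        by (simp add: W_def Fc_def FF_def algebra_simps)
    next
      case nT: False
      show ?thesis
      proof (cases "s \<le> real_of_int c")
        case False
        then show ?thesis using nT ric by (simp add: flat_step_def fp W_def)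
      next
        case True
        then have shf: "s < hf" using nT by simp
        have "Mx s (real_of_int c) = H s"
        proof (rule antisym)
          show "Mx s (real_of_int c) \<le> H s"
          proof (rule Mx_le)
            show "s \<le> real_of_int c" by (rule True)
            fix t assume t: "s \<le> t" "t \<le> real_of_int c"
            show "FF t \<le> H s"
            proof (cases "t \<le> real_of_int i")
              case True
              then show ?thesis using H_geFF[of t] H_mono[of s t] t by linarith
            next
              case False
              then have "FF t \<le> Fc" using F2c[of t] t Ap by (simp add: mult_nonneg_nonneg)
              then show ?thesis using Hb[of s] shf by linarith
            qed
          qed
          show "H s \<le> Mx s (real_of_int c)"
          proof (cases "s \<le> real_of_int c0")
            case True
            then show ?thesis using H_low[OF True] Mx_mono2[of s "real_of_int c0" "real_of_int c"] ric by simp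
          next
            case False
            then show ?thesis using H_high[of s] Mx_geFF[of s "real_of_int c"] \<open>s \<le> real_of_int c\<close> by simp
          qed
        qed
        then show ?thesis using nT True unfolding flat_step_def fp by (simp add: W_def H_def)
      qed
    qed
  qed
qed

end




context prof
begin

lemma deriv_sl:
  assumes "real_of_int n < s" "s < real_of_int n + 1"
  shows "(omega lam has_real_derivative sl n) (at s)"
proof -
  have "((\<lambda>x. omega lam (real_of_int n) + sl n * (x - real_of_int n)) has_real_derivative sl n) (at s)"
    by (auto intro!: derivative_eq_intros)
  then show ?thesis
  proof (rule has_field_derivative_transform_within_open[where S = "{real_of_int n<..<real_of_int n + 1}"])
    show "open {real_of_int n<..<real_of_int n + 1}" by simp
    show "s \<in> {real_of_int n<..<real_of_int n + 1}" using assms by simp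
    fix x assume "x \<in> {real_of_int n<..<real_of_int n + 1}"
    then show "omega lam (real_of_int n) + sl n * (x - real_of_int n) = omega lam x"
      using aff[of n x] by simp
  qed
qed

lemma deriv_val:
  assumes "real_of_int n < s" "s < real_of_int n + 1" "(omega lam has_real_derivative d) (at s)"
  shows "d = sl n"
  using DERIV_unique[OF assms(3) deriv_sl[OF assms(1,2)]] .

lemma OC_eq: "outer_corners lam = {c. sl (c - 1) = 1 \<and> sl c = -1}"
proof (intro set_eqI iffI)
  fix c assume c: "c \<in> outer_corners lam"
  have "1 = sl (c - 1)"
    using c unfolding outer_corners_def
    by (intro deriv_val[of "c - 1" "real_of_int c - 1/2"]) auto
  moreover have "-1 = sl c"
    using c unfolding outer_corners_def
    by (intro deriv_val[of "c" "real_of_int c + 1/2"]) auto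
  ultimately show "c \<in> {c. sl (c - 1) = 1 \<and> sl c = -1}" by simp
next
  fix c assume c: "c \<in> {c. sl (c - 1) = 1 \<and> sl c = -1}"
  have "(omega lam has_real_derivative 1) (at s)" if "s \<in> {real_of_int c - 1<..<real_of_int c}" for s
    using deriv_sl[of "c - 1" s] c that by simp
  moreover have "(omega lam has_real_derivative -1) (at s)" if "s \<in> {real_of_int c<..<real_of_int c + 1}" for s
    using deriv_sl[of "c" s] c that by simp
  ultimately show "c \<in> outer_corners lam" unfolding outer_corners_def by blast
qed

lemma IC_eq: "inner_corners lam = {c. sl (c - 1) = -1 \<and> sl c = 1}"
proof (intro set_eqI iffI)
  fix c assume c: "c \<in> inner_corners lam"
  have "-1 = sl (c - 1)"
    using c unfolding inner_corners_def
    by (intro deriv_val[of "c - 1" "real_of_int c - 1/2"]) auto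
  moreover have "1 = sl c"
    using c unfolding inner_corners_def
    by (intro deriv_val[of "c" "real_of_int c + 1/2"]) auto
  ultimately show "c \<in> {c. sl (c - 1) = -1 \<and> sl c = 1}" by simp
next
  fix c assume c: "c \<in> {c. sl (c - 1) = -1 \<and> sl c = 1}"
  have "(omega lam has_real_derivative -1) (at s)" if "s \<in> {real_of_int c - 1<..<real_of_int c}" for s
    using deriv_sl[of "c - 1" s] c that by simp
  moreover have "(omega lam has_real_derivative 1) (at s)" if "s \<in> {real_of_int c<..<real_of_int c + 1}" for s
    using deriv_sl[of "c" s] c that by simp
  ultimately show "c \<in> inner_corners lam" unfolding inner_corners_def by blast
qed

lemma OC_sub: "outer_corners lam \<subseteq> {L..R}"
proof
  fix c assume "c \<in> outer_corners lam"
  then have c: "sl (c - 1) = 1" "sl c = -1" by (auto simp: OC_eq)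
  have "\<not> c - 1 < L" using sl_left[of "c - 1"] c by auto
  moreover have "\<not> R \<le> c" using sl_right[of c] c by auto
  ultimately show "c \<in> {L..R}" by simp
qed

lemma IC_sub: "inner_corners lam \<subseteq> {L..R}"
proof
  fix c assume "c \<in> inner_corners lam"
  then have c: "sl (c - 1) = -1" "sl c = 1" by (auto simp: IC_eq)
  have "\<not> c < L" using sl_left[of c] c by auto
  moreover have "\<not> R \<le> c - 1" using sl_right[of "c - 1"] c by auto
  ultimately show "c \<in> {L..R}" by simp
qed

lemma finite_OC: "finite (outer_corners lam)"
  by (rule finite_subset[OF OC_sub]) simp

lemma finite_IC: "finite (inner_corners lam)"
  by (rule finite_subset[OF IC_sub]) simp

lemma L_IC: "L \<in> inner_corners lam"
  using sl_left[of "L - 1"] sL by (simp add: IC_eq)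

lemma R_IC: "R \<in> inner_corners lam"
  using sl_right[of R] sR by (simp add: IC_eq)

lemma FF_left: "x \<le> real_of_int L \<Longrightarrow> FF x = - (1 + A) * x"
  using left[of x] by (simp add: FF_def algebra_simps)

lemma FF_left_dec: "x \<le> y \<Longrightarrow> y \<le> real_of_int L \<Longrightarrow> FF y \<le> FF x"
  using FF_left[of x] FF_left[of y] A_facts(1) by (simp add: mult_left_mono)

lemma W_base: "W (L - 1) = omega lam"
proof
  fix s
  show "W (L - 1) s = omega lam s"
  proof (cases "s \<le> real_of_int (L - 1)")
    case True
    have "Mx s (real_of_int (L - 1)) = FF s"
      by (rule Mx_eqI[of s s]) (use True FF_left_dec in auto)
    then show ?thesis using True by (simp add: W_def FF_def)
  next
    case False then show ?thesis by (simp add: W_def)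
  qed
qed


definition cs :: "int list" where "cs = sorted_list_of_set (outer_corners lam)"

definition lst :: "nat \<Rightarrow> int" where "lst k = (if k = 0 then L - 1 else cs ! (k - 1))"

lemma cs_set: "set cs = outer_corners lam"
  unfolding cs_def using finite_OC by simp

lemma cs_sorted: "sorted_wrt (<) cs"
  unfolding cs_def by simp

lemma cs_less: "i < j \<Longrightarrow> j < length cs \<Longrightarrow> cs ! i < cs ! j"
  using sorted_wrt_nth_less[OF cs_sorted] by blast

lemma cs_le: "i \<le> j \<Longrightarrow> j < length cs \<Longrightarrow> cs ! i \<le> cs ! j"
  using cs_less[of i j] by (cases "i = j") auto

lemma cs_corner: "j < length cs \<Longrightarrow> sl (cs ! j - 1) = 1 \<and> sl (cs ! j) = -1"
  using cs_set OC_eq nth_mem[of j cs] by auto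

lemma fold_inv:
  "k \<le> length cs \<Longrightarrow> fold (flat_step e lam) (take k cs) (omega lam) = W (lst k)
     \<and> sl (lst k) = -1 \<and> L - 1 \<le> lst k
     \<and> (\<forall>t. real_of_int (L - 1) \<le> t \<and> t \<le> real_of_int (lst k) \<longrightarrow> FF t \<le> FF (real_of_int (L - 1)))
     \<and> (\<forall>s t. s \<le> t \<and> t \<le> real_of_int (lst k) \<longrightarrow> FF t - FF s \<le> 1 + A)"
proof (induction k)
  case 0
  have "sl (L - 1) = -1" by (rule sl_left) simp
  moreover have "FF t - FF s \<le> 1 + A" if "s \<le> t" "t \<le> real_of_int (L - 1)" for s t
    using FF_left_dec[of s t] that A_facts(1) by simp
  ultimately show ?case by (auto simp: lst_def W_base)
next
  case (Suc k)
  then have k: "k < length cs" by simp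
  have IH: "fold (flat_step e lam) (take k cs) (omega lam) = W (lst k)" "sl (lst k) = -1" "L - 1 \<le> lst k"
    "\<forall>t. real_of_int (L - 1) \<le> t \<and> t \<le> real_of_int (lst k) \<longrightarrow> FF t \<le> FF (real_of_int (L - 1))"
    "\<forall>s t. s \<le> t \<and> t \<le> real_of_int (lst k) \<longrightarrow> FF t - FF s \<le> 1 + A"
    using Suc by auto
  define c where "c = cs ! k"
  have lk: "lst (Suc k) = c" by (simp add: lst_def c_def)
  have cc: "sl (c - 1) = 1" "sl c = -1" using cs_corner[OF k] by (auto simp: c_def)
  have c0c: "lst k < c"
  proof (cases "k = 0")
    case True
    have "\<not> c - 1 < L" using sl_left[of "c - 1"] cc by auto
    then show ?thesis using True by (simp add: lst_def)
  next
    case False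
    then show ?thesis using cs_less[of "k - 1" k] k by (simp add: lst_def c_def)
  qed
  have noc: "\<not> (sl (m - 1) = 1 \<and> sl m = -1)" if m: "lst k < m" "m < c" for m
  proof
    assume "sl (m - 1) = 1 \<and> sl m = -1"
    then have "m \<in> set cs" using cs_set OC_eq by auto
    then obtain j where j: "j < length cs" "cs ! j = m" by (auto simp: in_set_conv_nth)
    show False
    proof (cases "j < k")
      case True
      then have "k \<noteq> 0" by simp
      then have "cs ! j \<le> lst k" using cs_le[of j "k - 1"] True k by (simp add: lst_def)
      then show False using m j by simp
    next
      case False
      then have "c \<le> cs ! j" using cs_le[of k j] j by (simp add: c_def)
      then show False using m j by simp
    qed
  qed
  have step: "flat_step e lam c (W (lst k)) = W c"
    by (rule flat[OF c0c IH(2) cc(1) cc(2) noc]) auto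
  have ff: "\<forall>t. real_of_int (lst k) \<le> t \<and> t \<le> real_of_int c \<longrightarrow> FF t \<le> FF (real_of_int (lst k))"
    "(\<forall>s t. s \<le> t \<and> t \<le> real_of_int (lst k) \<longrightarrow> FF t - FF s \<le> 1 + A) \<Longrightarrow>
         (\<forall>s t. s \<le> t \<and> t \<le> real_of_int c \<longrightarrow> FF t - FF s \<le> 1 + A)"
    using FFc_le[OF c0c IH(2) cc(1) cc(2) noc] by auto
  have "fold (flat_step e lam) (take (Suc k) cs) (omega lam) = W c"
    using step IH(1) k by (simp add: take_Suc_conv_app_nth c_def)
  moreover have "\<forall>t. real_of_int (L - 1) \<le> t \<and> t \<le> real_of_int c \<longrightarrow> FF t \<le> FF (real_of_int (L - 1))"
  proof (intro allI impI)
    fix t assume t: "real_of_int (L - 1) \<le> t \<and> t \<le> real_of_int c"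
    show "FF t \<le> FF (real_of_int (L - 1))"
    proof (cases "t \<le> real_of_int (lst k)")
      case True then show ?thesis using IH(4) t by blast
    next
      case False
      then have "FF t \<le> FF (real_of_int (lst k))" using ff(1) t by simp
      moreover have "FF (real_of_int (lst k)) \<le> FF (real_of_int (L - 1))" using IH(3,4) by simp
      ultimately show ?thesis by linarith
    qed
  qed
  moreover have "\<forall>s t. s \<le> t \<and> t \<le> real_of_int c \<longrightarrow> FF t - FF s \<le> 1 + A" using ff(2) IH(5) by blast
  ultimately show ?case using lk cc IH(3) c0c by simp
qed

definition cst :: int where "cst = lst (length cs)"

lemma OP_eq: "omega_plus e lam = W cst"
  using fold_inv[of "length cs"] unfolding omega_plus_def cst_def cs_def[symmetric] by simp

lemma cst_facts: "sl cst = -1" "L - 1 \<le> cst"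
  "\<And>t. real_of_int (L - 1) \<le> t \<Longrightarrow> t \<le> real_of_int cst \<Longrightarrow> FF t \<le> FF (real_of_int (L - 1))"
  "\<And>s t. s \<le> t \<Longrightarrow> t \<le> real_of_int cst \<Longrightarrow> FF t - FF s \<le> 1 + A"
  using fold_inv[of "length cs"] unfolding cst_def by auto

lemma cst_max: "m \<in> outer_corners lam \<Longrightarrow> m \<le> cst"
proof -
  assume "m \<in> outer_corners lam"
  then have "m \<in> set cs" using cs_set by simp
  then obtain j where j: "j < length cs" "cs ! j = m" by (auto simp: in_set_conv_nth)
  then have "cs \<noteq> []" by auto
  then show "m \<le> cst" using cs_le[of j "length cs - 1"] j by (simp add: cst_def lst_def)
qed

lemma after_cst: "cst < R" "\<And>m. cst \<le> m \<Longrightarrow> m < R \<Longrightarrow> sl m = -1"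
proof -
  show "cst < R"
  proof (rule ccontr)
    assume "\<not> cst < R"
    then have "sl cst = 1" by (intro sl_right) simp
    then show False using cst_facts(1) by simp
  qed
  fix m assume m: "cst \<le> m" "m < R"
  show "sl m = -1"
  proof (rule ccontr)
    assume "sl m \<noteq> -1"
    then have m1: "sl m = 1" using spm[of m] by simp
    have "k \<le> R - 1 \<longrightarrow> sl k = 1" if "m \<le> k" for k
      using that
    proof (induction k rule: int_ge_induct)
      case base then show ?case using m1 by simp
    next
      case (step k)
      show ?case
      proof
        assume k1: "k + 1 \<le> R - 1"
        then have "sl k = 1" using step by simp
        have "sl (k + 1) \<noteq> -1"
        proof
          assume "sl (k + 1) = -1"
          then have "k + 1 \<in> outer_corners lam" using \<open>sl k = 1\<close> by (simp add: OC_eq)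
          then have "k + 1 \<le> cst" by (rule cst_max)
          then show False using step.hyps m by simp
        qed
        then show "sl (k + 1) = 1" using spm[of "k + 1"] by simp
      qed
    qed
    then have "sl (R - 1) = 1" using m by simp
    then show False using sR by simp
  qed
qed

lemma om_after: "real_of_int cst \<le> x \<Longrightarrow> x \<le> real_of_int R \<Longrightarrow>
    omega lam x = omega lam (real_of_int cst) - (x - real_of_int cst)"
  using lin_run[of cst R "-1" x] after_cst by force

lemma thm1: "0 \<le> omega_plus e lam s - omega lam s \<and> omega_plus e lam s - omega lam s \<le> real e"
proof (cases "s \<le> real_of_int cst")
  case True
  have eq: "omega_plus e lam s - omega lam s = Mx s (real_of_int cst) - FF s"
    using True by (simp add: OP_eq W_def FF_def)
  have "FF s \<le> Mx s (real_of_int cst)" using True by (rule Mx_geFF)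
  moreover have "Mx s (real_of_int cst) \<le> FF s + (1 + A)"
    by (rule Mx_le) (use True cst_facts(4)[of s] in force)+
  ultimately show ?thesis using eq A_facts(5) by linarith
next
  case False
  then show ?thesis by (simp add: OP_eq W_def)
qed

lemma thm2: "s \<notin> {real_of_int (Min (inner_corners lam)) - 1 <..< real_of_int (Max (inner_corners lam))}
    \<longrightarrow> omega_plus e lam s = \<bar>s\<bar>"
proof
  assume s: "s \<notin> {real_of_int (Min (inner_corners lam)) - 1 <..< real_of_int (Max (inner_corners lam))}"
  have "Min (inner_corners lam) \<le> L" using L_IC finite_IC by simp
  moreover have "R \<le> Max (inner_corners lam)" using R_IC finite_IC by simp
  ultimately have "s \<le> real_of_int L - 1 \<or> real_of_int R \<le> s" using s by force
  then show "omega_plus e lam s = \<bar>s\<bar>"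
  proof
    assume sL: "s \<le> real_of_int L - 1"
    have sc: "s \<le> real_of_int cst" using sL cst_facts(2) by linarith
    have "Mx s (real_of_int cst) = FF s"
    proof (rule Mx_eqI[of s s])
      show "s \<le> s" "s \<le> real_of_int cst" "FF s = FF s" using sc by auto
      fix t assume t: "s \<le> t" "t \<le> real_of_int cst"
      show "FF t \<le> FF s"
      proof (cases "t \<le> real_of_int (L - 1)")
        case True then show ?thesis using FF_left_dec[of s t] t by simp
      next
        case False
        then have "FF t \<le> FF (real_of_int (L - 1))" using cst_facts(3)[of t] t by simp
        moreover have "FF (real_of_int (L - 1)) \<le> FF s" using FF_left_dec[of s "real_of_int (L - 1)"] sL by simp
        ultimately show ?thesis by linarith
      qed
    qed
    moreover have "s < 0" using sL Lneg by linarith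
    ultimately show ?thesis using sc left[of s] sL by (simp add: OP_eq W_def FF_def)
  next
    assume sR: "real_of_int R \<le> s"
    then have "\<not> s \<le> real_of_int cst" using after_cst(1) by linarith
    moreover have "0 \<le> s" using sR Rpos by linarith
    ultimately show ?thesis using right[OF sR] by (simp add: OP_eq W_def)
  qed
qed

end




lemma seg_param:
  fixes p v :: "'a::real_vector"
  assumes m: "0 \<le> m"
  shows "closed_segment p (p + m *\<^sub>R v) = (\<lambda>t. p + t *\<^sub>R v) ` {0..m}"
proof -
  have eq: "(1 - u) *\<^sub>R p + u *\<^sub>R (p + m *\<^sub>R v) = p + (u * m) *\<^sub>R v" for u
  proof -
    have "(1 - u) *\<^sub>R p + u *\<^sub>R (p + m *\<^sub>R v) = ((1 - u) + u) *\<^sub>R p + (u * m) *\<^sub>R v"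
      by (simp only: scaleR_add_right scaleR_add_left scaleR_scaleR add.assoc)
    then show ?thesis by simp
  qed
  show ?thesis
  proof (intro set_eqI iffI)
    fix z assume "z \<in> closed_segment p (p + m *\<^sub>R v)"
    then obtain u where u: "0 \<le> u" "u \<le> 1" "z = (1 - u) *\<^sub>R p + u *\<^sub>R (p + m *\<^sub>R v)"
      unfolding closed_segment_def by blast
    have "u * m \<le> 1 * m" using u(2) m by (rule mult_right_mono)
    moreover have "0 \<le> u * m" using u(1) m by (rule mult_nonneg_nonneg)
    ultimately have um: "u * m \<in> {0..m}" by simp
    have "z = p + (u * m) *\<^sub>R v" using u(3) eq[of u] by (rule trans)
    then show "z \<in> (\<lambda>t. p + t *\<^sub>R v) ` {0..m}" using um by (rule image_eqI)
  next
    fix z assume "z \<in> (\<lambda>t. p + t *\<^sub>R v) ` {0..m}"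
    then obtain t where t: "0 \<le> t" "t \<le> m" "z = p + t *\<^sub>R v" by auto
    show "z \<in> closed_segment p (p + m *\<^sub>R v)"
    proof (cases "m = 0")
      case True
      then have "t = 0" using t by simp
      then have "z = (1 - 0) *\<^sub>R p + 0 *\<^sub>R (p + m *\<^sub>R v) \<and> 0 \<le> (0::real) \<and> (0::real) \<le> 1" using t(3) by simp
      then show ?thesis unfolding closed_segment_def by blast
    next
      case False
      then have mp: "0 < m" using m by simp
      define u where "u = t / m"
      have u0: "0 \<le> u" using t mp by (simp add: u_def)
      have u1: "u \<le> 1" using t mp by (simp add: u_def divide_le_eq_1)
      have um: "u * m = t" using mp by (simp add: u_def)
      have "z = p + (u * m) *\<^sub>R v" unfolding um by (rule t(3))
      also have "\<dots> = (1 - u) *\<^sub>R p + u *\<^sub>R (p + m *\<^sub>R v)" by (rule eq[symmetric])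
      finally have "z = (1 - u) *\<^sub>R p + u *\<^sub>R (p + m *\<^sub>R v)" .
      then show ?thesis unfolding closed_segment_def using u0 u1 by blast
    qed
  qed
qed

context prof
begin

abbreviation OP where "OP \<equiv> omega_plus e lam"

lemma Min_IC: "Min (inner_corners lam) = L"
  by (rule Min_eqI) (use finite_IC IC_sub L_IC in auto)

lemma Max_IC: "Max (inner_corners lam) = R"
  by (rule Max_eqI) (use finite_IC IC_sub R_IC in auto)

lemma OP_abs: "s \<le> real_of_int L - 1 \<or> real_of_int R \<le> s \<Longrightarrow> OP s = \<bar>s\<bar>"
  using thm2[of s] Min_IC Max_IC by auto

lemma cont_OP: "continuous_on UNIV OP"
  unfolding OP_eq by (rule cont_W)

definition Phi :: "real \<Rightarrow> real" where "Phi x = OP x - A * x"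

lemma Phi_mono: assumes "x \<le> y" "y \<le> real_of_int R" shows "Phi y \<le> Phi x"
proof -
  have FFd: "FF y' \<le> FF x'" if "real_of_int cst \<le> x'" "x' \<le> y'" "y' \<le> real_of_int R" for x' y'
  proof -
    have "FF x' = FF (real_of_int cst) - (1 + A) * (x' - real_of_int cst)"
      using om_after[of x'] that by (simp add: FF_def algebra_simps)
    moreover have "FF y' = FF (real_of_int cst) - (1 + A) * (y' - real_of_int cst)"
      using om_after[of y'] that by (simp add: FF_def algebra_simps)
    moreover have "(1 + A) * (x' - real_of_int cst) \<le> (1 + A) * (y' - real_of_int cst)"
      using that A_facts(1) by (intro mult_left_mono) auto
    ultimately show ?thesis by linarith
  qed
  have Phi_lo: "Phi z = Mx z (real_of_int cst)" if "z \<le> real_of_int cst" for z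
    using that by (simp add: Phi_def OP_eq W_def)
  have Phi_hi: "Phi z = FF z" if "real_of_int cst \<le> z" for z
  proof (cases "z = real_of_int cst")
    case True then show ?thesis by (simp add: Phi_def OP_eq W_def Mx_self)
  next
    case False then show ?thesis using that by (simp add: Phi_def OP_eq W_def FF_def)
  qed
  show ?thesis
  proof (cases "y \<le> real_of_int cst")
    case True then show ?thesis using Phi_lo[of x] Phi_lo[of y] Mx_mono[of x y] assms by simp
  next
    case yc: False
    show ?thesis
    proof (cases "x \<le> real_of_int cst")
      case True
      have "Phi y = FF y" using yc by (intro Phi_hi) simp
      also have "\<dots> \<le> FF (real_of_int cst)" using yc assms by (intro FFd) auto
      also have "\<dots> = Mx (real_of_int cst) (real_of_int cst)" by (simp add: Mx_self)
      also have "\<dots> \<le> Mx x (real_of_int cst)" using True by (intro Mx_mono) auto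
      also have "\<dots> = Phi x" using True by (simp add: Phi_lo)
      finally show ?thesis .
    next
      case False
      then show ?thesis using Phi_hi[of x] Phi_hi[of y] FFd[of x y] assms yc by simp
    qed
  qed
qed

definition DD where "DD = {x. OP x \<noteq> \<bar>x\<bar>}"
definition aa where "aa = Inf DD"
definition bb where "bb = Sup DD"

lemma DD_facts: "0 \<in> DD" "DD \<subseteq> {real_of_int L - 1 .. real_of_int R}" "open DD"
proof -
  have "0 < OP 0" using thm1[of 0] pos0 by linarith
  then show "0 \<in> DD" by (simp add: DD_def)
  show "DD \<subseteq> {real_of_int L - 1 .. real_of_int R}"
  proof
    fix x assume "x \<in> DD"
    then have "\<not> (x \<le> real_of_int L - 1 \<or> real_of_int R \<le> x) \<or> x = real_of_int L - 1 \<or> x = real_of_int R"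
      using OP_abs[of x] by (auto simp: DD_def)
    then show "x \<in> {real_of_int L - 1 .. real_of_int R}" using Lneg Rpos by auto
  qed
  show "open DD" unfolding DD_def
    by (rule open_Collect_neq) (use cont_OP in \<open>auto intro: continuous_intros\<close>)
qed

lemma ab_facts: "aa \<le> 0" "0 \<le> bb" "bb \<le> real_of_int R" "OP aa = \<bar>aa\<bar>"
proof -
  have bddb: "bdd_below DD" unfolding bdd_below_def using DD_facts(2) by (intro exI[of _ "real_of_int L - 1"]) auto
  have bdda: "bdd_above DD" unfolding bdd_above_def using DD_facts(2) by (intro exI[of _ "real_of_int R"]) auto
  show "aa \<le> 0" unfolding aa_def using DD_facts(1) bddb by (rule cInf_lower)
  show "0 \<le> bb" unfolding bb_def using DD_facts(1) bdda by (intro cSup_upper) auto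
  show "bb \<le> real_of_int R" unfolding bb_def using DD_facts(1,2) by (intro cSup_least) auto
  show "OP aa = \<bar>aa\<bar>"
  proof (rule ccontr)
    assume "OP aa \<noteq> \<bar>aa\<bar>"
    then have "aa \<in> DD" by (simp add: DD_def)
    then obtain eps where eps: "eps > 0" "ball aa eps \<subseteq> DD" using DD_facts(3) open_contains_ball by blast
    then have "aa - eps / 2 \<in> DD" by (auto simp: dist_real_def)
    then have "aa \<le> aa - eps / 2" unfolding aa_def by (rule cInf_lower[OF _ bddb])
    then show False using eps by simp
  qed
qed

definition Gs where "Gs = {z. aa \<le> fst z \<and> fst z \<le> bb \<and> 0 \<le> snd z \<and> \<bar>fst z\<bar> \<le> snd z \<and> snd z \<le> OP (fst z)}"

lemma gr_eq: "gr OP = Gs"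
  unfolding gr_def Gs_def aa_def bb_def DD_def Let_def by auto

lemma closed_Gs: "closed Gs"
proof -
  have c1: "continuous_on UNIV (\<lambda>z::real\<times>real. OP (fst z))"
    by (rule continuous_on_compose2[OF cont_OP]) (auto intro: continuous_intros)
  show ?thesis unfolding Gs_def
    by (intro closed_Collect_conj closed_Collect_le continuous_intros c1)
qed


definition NN where "NN = norm (1::real, A)"

lemma NN_pos: "0 < NN"
  unfolding NN_def by (simp add: zero_prod_def)

lemma sd: "shake_dir e = (1 / NN, A / NN)"
  by (simp add: shake_dir_def NN_def)

definition TT where "TT q = {t. (q, - q) + t *\<^sub>R shake_dir e \<in> Gs}"

lemma pt: "(q, - q) + t *\<^sub>R shake_dir e = (q + t / NN, - q + A * (t / NN))"
  by (simp add: sd)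

lemma memT: "t \<in> TT q \<longleftrightarrow> aa \<le> q + t / NN \<and> q + t / NN \<le> bb \<and> 0 \<le> - q + A * (t / NN)
   \<and> \<bar>q + t / NN\<bar> \<le> - q + A * (t / NN) \<and> - q + A * (t / NN) \<le> OP (q + t / NN)"
  by (simp add: TT_def pt Gs_def)

lemma T_nonneg: assumes "t \<in> TT q" shows "0 \<le> t"
proof -
  define w where "w = t / NN"
  have h: "- (q + w) \<le> - q + A * w" using assms unfolding memT w_def[symmetric] by (simp only: abs_le_iff)
  have eq: "(1 + A) * w = w + A * w" by (simp add: algebra_simps)
  have "0 \<le> (1 + A) * w" using h eq by linarith
  then have "0 \<le> w" using A_facts(1) by (simp add: zero_le_mult_iff)
  then show ?thesis using NN_pos by (simp add: w_def zero_le_divide_iff)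
qed

lemma T_q: assumes "t \<in> TT q" shows "aa \<le> q" "q \<le> 0"
proof -
  define w where "w = t / NN"
  have w: "0 \<le> w" using T_nonneg[OF assms] NN_pos by (simp add: w_def)
  have m: "aa \<le> q + w" "q + w \<le> bb" "q + w \<le> - q + A * w" "- q + A * w \<le> OP (q + w)"
    using assms unfolding memT w_def[symmetric] by (auto simp only: abs_le_iff)
  have "A * w \<le> 1 * w" using A_facts(2) w by (intro mult_right_mono) auto
  then show "q \<le> 0" using m(3) by simp
  show "aa \<le> q"
  proof (rule ccontr)
    assume qa: "\<not> aa \<le> q"
    have "Phi (q + w) \<le> Phi aa" using m ab_facts(3) by (intro Phi_mono) auto
    moreover have "Phi aa = - aa - A * aa" using ab_facts(1,4) by (simp add: Phi_def)
    moreover have "- q - A * q \<le> Phi (q + w)" using m(4) by (simp add: Phi_def algebra_simps)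
    moreover have "(1 + A) * aa > (1 + A) * q" using qa A_facts(1) by (intro mult_strict_left_mono) auto
    ultimately show False by (simp add: algebra_simps)
  qed
qed

lemma T_down: assumes "t \<in> TT q" "0 \<le> t'" "t' \<le> t" shows "t' \<in> TT q"
proof -
  define w where "w = t / NN"
  define w' where "w' = t' / NN"
  have q: "aa \<le> q" "q \<le> 0" using T_q[OF assms(1)] by auto
  have w: "0 \<le> w'" "w' \<le> w" using assms(2,3) NN_pos by (auto simp: divide_right_mono w_def w'_def)
  have m: "aa \<le> q + w" "q + w \<le> bb" "q + w \<le> - q + A * w" "- q + A * w \<le> OP (q + w)"
    using assms(1) unfolding memT w_def[symmetric] by (auto simp only: abs_le_iff)
  have A1: "0 \<le> 1 - A" "0 \<le> A" using A_facts by auto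
  have "(1 - A) * w' \<le> (1 - A) * w" using A1 w by (intro mult_left_mono) auto
  moreover have "(1 - A) * w' = w' - A * w'" "(1 - A) * w = w - A * w" by (simp_all add: algebra_simps)
  ultimately have c1: "q + w' \<le> - q + A * w'" using m(3) by linarith
  have "0 \<le> A * w'" using A1 w by simp
  then have c2: "- (q + w') \<le> - q + A * w'" using w by linarith
  have c3: "0 \<le> - q + A * w'" using \<open>0 \<le> A * w'\<close> q by linarith
  have "Phi (q + w) \<le> Phi (q + w')" using w m(2) ab_facts(3) by (intro Phi_mono) auto
  then have c4: "- q + A * w' \<le> OP (q + w')" using m(4) by (simp add: Phi_def algebra_simps)
  have c0: "aa \<le> q + w'" "q + w' \<le> bb" using q w m(2) by auto
  show ?thesis unfolding memT w'_def[symmetric] using c0 c1 c2 c3 c4 by (simp only: abs_le_iff)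
qed

lemma T_closed: "closed (TT q)"
proof -
  have "TT q = (\<lambda>t. (q, - q) + t *\<^sub>R shake_dir e) -` Gs" by (auto simp: TT_def)
  moreover have "closed ((\<lambda>t. (q, - q) + t *\<^sub>R shake_dir e) -` Gs)"
    by (rule closed_vimage[OF closed_Gs]) (intro continuous_on_add continuous_on_const continuous_on_scaleR continuous_on_id)
  ultimately show ?thesis by simp
qed

lemma T_bdd: "bdd_above (TT q)"
proof -
  have "t \<le> NN * (bb - aa)" if "t \<in> TT q" for t
  proof -
    have "q + t / NN \<le> bb" using that by (simp add: memT)
    moreover have "aa \<le> q" using T_q[OF that] by simp
    ultimately have "t / NN \<le> bb - aa" by simp
    then show ?thesis using NN_pos by (simp add: field_simps)
  qed
  then show ?thesis unfolding bdd_above_def by blast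
qed

lemma T_Icc: assumes "TT q \<noteq> {}" shows "TT q = {0 .. Sup (TT q)}"
proof -
  have mT: "Sup (TT q) \<in> TT q" by (rule closed_contains_Sup) (use assms T_bdd T_closed in auto)
  show ?thesis
  proof (intro set_eqI iffI)
    fix t assume t: "t \<in> TT q"
    then show "t \<in> {0 .. Sup (TT q)}" using T_nonneg[OF t] cSup_upper[OF t T_bdd] by simp
  next
    fix t assume "t \<in> {0 .. Sup (TT q)}"
    then show "t \<in> TT q" using T_down[OF mT] by simp
  qed
qed

lemma piece_eq:
  "(if Gs \<inter> {(q, - q) + t *\<^sub>R shake_dir e | t. True} = {} then {}
    else closed_segment (q, - q) ((q, - q) + measure lborel {t. (q, - q) + t *\<^sub>R shake_dir e \<in> Gs} *\<^sub>R shake_dir e))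
   = (\<lambda>t. (q, - q) + t *\<^sub>R shake_dir e) ` TT q"
proof -
  have inter: "Gs \<inter> {(q, - q) + t *\<^sub>R shake_dir e | t. True} = (\<lambda>t. (q, - q) + t *\<^sub>R shake_dir e) ` TT q"
    unfolding TT_def by blast
  have TTd: "{t. (q, - q) + t *\<^sub>R shake_dir e \<in> Gs} = TT q" by (simp add: TT_def)
  show ?thesis
  proof (cases "TT q = {}")
    case True then show ?thesis using inter by simp
  next
    case False
    define m where "m = Sup (TT q)"
    have TI: "TT q = {0 .. m}" unfolding m_def by (rule T_Icc[OF False])
    have m0: "0 \<le> m" using False TI by auto
    have meas: "measure lborel {t. (q, - q) + t *\<^sub>R shake_dir e \<in> Gs} = m"
      unfolding TTd TI using m0 by (simp add: measure_lborel_Icc)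
    have ne: "Gs \<inter> {(q, - q) + t *\<^sub>R shake_dir e | t. True} \<noteq> {}" unfolding inter using False by simp
    have "closed_segment (q, - q) ((q, - q) + m *\<^sub>R shake_dir e) = (\<lambda>t. (q, - q) + t *\<^sub>R shake_dir e) ` {0..m}"
      by (rule seg_param[OF m0])
    then show ?thesis unfolding meas using ne TI by simp
  qed
qed

lemma thm3: "shake e (gr OP) = gr OP"
proof -
  have "shake e Gs = (\<Union>p\<in>{q. snd q = - fst q}. (\<lambda>t. p + t *\<^sub>R shake_dir e) ` TT (fst p))"
    unfolding shake_def
  proof (rule SUP_cong[OF refl])
    fix p :: "real \<times> real" assume "p \<in> {q. snd q = - fst q}"
    then obtain q where p: "p = (q, - q)" by (cases p) auto
    show "(if Gs \<inter> {p + t *\<^sub>R shake_dir e | t. True} = {} then {}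
      else closed_segment p (p + measure lborel {t. p + t *\<^sub>R shake_dir e \<in> Gs} *\<^sub>R shake_dir e)) =
      (\<lambda>t. p + t *\<^sub>R shake_dir e) ` TT (fst p)"
      unfolding p fst_conv by (rule piece_eq)
  qed
  also have "\<dots> = Gs"
  proof (intro set_eqI iffI)
    fix z assume "z \<in> (\<Union>p\<in>{q. snd q = - fst q}. (\<lambda>t. p + t *\<^sub>R shake_dir e) ` TT (fst p))"
    then obtain p t where p: "snd p = - fst p" and t: "t \<in> TT (fst p)" and z: "z = p + t *\<^sub>R shake_dir e" by auto
    have "p = (fst p, - fst p)" using p by (cases p) auto
    then show "z \<in> Gs" using t z by (simp add: TT_def)
  next
    fix z assume zG: "z \<in> Gs"
    obtain x y where z: "z = (x, y)" by (cases z)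
    have A1: "0 < 1 + A" using A_facts(1) by simp
    define t where "t = NN * (x + y) / (1 + A)"
    define q where "q = x - (x + y) / (1 + A)"
    have tn: "t / NN = (x + y) / (1 + A)" using NN_pos by (simp add: t_def)
    have "(q, - q) + t *\<^sub>R shake_dir e = (q + t / NN, - q + A * (t / NN))" by (rule pt)
    also have "\<dots> = (x, y)"
    proof -
      have e0: "(1 + A) * ((x + y) / (1 + A)) = x + y" using A1 by simp
      have e1: "(1 + A) * ((x + y) / (1 + A)) = (x + y) / (1 + A) + A * ((x + y) / (1 + A))"
        by (simp only: distrib_right mult_1_left)
      have "- q + A * ((x + y) / (1 + A)) = y" unfolding q_def using e0 e1 by linarith
      then show ?thesis using tn by (simp add: q_def)
    qed
    finally have eq: "(q, - q) + t *\<^sub>R shake_dir e = z" using z by simp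
    then have "t \<in> TT q" using zG by (simp add: TT_def)
    then show "z \<in> (\<Union>p\<in>{q. snd q = - fst q}. (\<lambda>t. p + t *\<^sub>R shake_dir e) ` TT (fst p))"
      using eq by (intro UN_I[of "(q, - q)"]) auto
  qed
  finally show ?thesis using gr_eq by simp
qed

end


theorem proposition5p5:
  fixes e :: nat and lam :: "nat list"
  assumes "2 \<le> e" and "is_partition lam" and "lam \<noteq> []" and "e_regular e lam"
  shows "(\<forall>s. 0 \<le> omega_plus e lam s - omega lam s \<and> omega_plus e lam s - omega lam s \<le> real e)
       \<and> (\<forall>s. s \<notin> {real_of_int (Min (inner_corners lam)) - 1 <..< real_of_int (Max (inner_corners lam))}
              \<longrightarrow> omega_plus e lam s = \<bar>s\<bar>)
       \<and> shake e (gr (omega_plus e lam)) = gr (omega_plus e lam)"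
proof -
  note part = assms(2) and ne = assms(3)
  interpret P: prof e lam "sg lam" "- int (lam ! 0)" "int (length lam)"
  proof
    show "2 \<le> e" by (rule assms(1))
    show "\<And>n x. real_of_int n \<le> x \<Longrightarrow> x \<le> real_of_int n + 1 \<Longrightarrow>
        omega lam x = omega lam (real_of_int n) + sg lam n * (x - real_of_int n)"
      by (rule omega_aff[OF part])
    show "\<And>n. sg lam n = 1 \<or> sg lam n = -1" by (rule sg_pm)
    show "\<And>x. x \<le> real_of_int (- int (lam ! 0)) \<Longrightarrow> omega lam x = - x"
      using omega_left[OF part ne] by simp
    show "\<And>x. real_of_int (int (length lam)) \<le> x \<Longrightarrow> omega lam x = x"
      using omega_right[OF part] by simp
    show "- int (lam ! 0) < 0" using lam0_pos[OF part ne] by simp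
    show "0 < int (length lam)" using ne by simp
    show "sg lam (- int (lam ! 0)) = 1" by (rule sg_L[OF part ne])
    show "sg lam (int (length lam) - 1) = -1" by (rule sg_R[OF part ne])
    show "\<And>n. (\<forall>j<e. sg lam (n + int j) = 1) \<Longrightarrow> int (length lam) \<le> n"
      using run_bound[OF part assms(4)] assms(1) by simp
    show "\<And>x. \<bar>x\<bar> \<le> omega lam x" by (rule omega_ge_abs[OF part])
    show "0 < omega lam 0" by (rule omega0_pos[OF part ne])
  qed
  show ?thesis using P.thm1 P.thm2 P.thm3 by blast
qed

end
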